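(* Let $f:(0,\infty)\to\mathbb R$ be convex with $f(1)=0$, $n\ge2$ an integer, $\rho\ge1$. Then: (a) $\mathcal P_n(\rho)$ is non-empty, convex and compact. (b) For any $Q\in\mathcal P_n$ supported on $\mathcal A_n$, $D_f(\cdot\|Q)$ and $D_f(Q\|\cdot)$ attain their maxima over $\mathcal P_n(\rho)$. (c) Let $u_f(n,\rho):=\max_{Q\in\mathcal P_n(\rho)}D_f(Q\|U_n)$ and $v_f(n,\rho):=\max_{Q\in\mathcal P_n(\rho)}D_f(U_n\|Q)$. For $\rho>1$ let $\Gamma_n(\rho):=[\frac1{1+(n-1)\rho},\frac1n]$ and for $\beta\in\Gamma_n(\rho)$ let $i_\beta:=\lfloor\frac{1-n\beta}{(\rho-1)\beta}\rfloor$ and $Q_\beta(j):=\rho\beta$ for $j\le i_\beta$, $Q_\beta(i_\beta+1):=1-(n+i_\beta(\rho-1)-1)\beta$, $Q_\beta(j):=\beta$ for $i_\beta+2\le j\le n$. Then $Q_\beta\in\mathcal P_n(\rho)$, $u_f(n,\rho)=\max_{\beta\in\Gamma_n(\rho)}D_f(Q_\beta\|U_n)$ and $v_f(n,\rho)=\max_{\beta\in\Gamma_n(\rho)}D_f(U_n\|Q_\beta)$. (d) With $g_f^{(\rho)}(x):=xf\big(\frac{\rho}{1+(\rho-1)x}\big)+(1-x)f\big(\frac1{1+(\rho-1)x}\big)$, $x\in[0,1]$, and $f^\ast(t):=tf(1/t)$: $\max_{m\in\{0,\dots,n\}}g_f^{(\rho)}(\tfrac mn)\le u_f(n,\rho)\le\max_{x\in[0,1]}g_f^{(\rho)}(x)$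 and $\max_{m\in\{0,\dots,n\}}g_{f^\ast}^{(\rho)}(\tfrac mn)\le v_f(n,\rho)\le\max_{x\in[0,1]}g_{f^\ast}^{(\rho)}(x)$. (e) $\lim_{n\to\infty}u_f(n,\rho)=\max_{x\in[0,1]}g_f^{(\rho)}(x)$ and $\lim_{n\to\infty}v_f(n,\rho)=\max_{x\in[0,1]}\Big\{\frac{\rho x}{1+(\rho-1)x}f\big(\frac{1+(\rho-1)x}{\rho}\big)+\frac{(1-x)f(1+(\rho-1)x)}{1+(\rho-1)x}\Big\}$. (f) If $g_f^{(\rho)}$ is differentiable on $(0,1)$ with derivative bounded above by $K_f(\rho)\ge0$, then $0\le\lim_{n'\to\infty}u_f(n',\rho)-u_f(n,\rho)\le K_f(\rho)/n$. (g) With $f(0):=\lim_{t\to0}f(t)\in(-\infty,+\infty]$: $\lim_{\rho\to\infty}u_f(n,\rho)=(1-\frac1n)f(0)+\frac{f(n)}n$. If moreover $f(0)<\infty$, $f$ is differentiable on $(0,n)$ and $K_n:=\sup_{t\in(0,n)}|f'(t)|<\infty$, then for all $\rho\ge1$: $0\le\lim_{\rho'\to\infty}u_f(n,\rho')-u_f(n,\rho)\le\frac{2K_n(n-1)}{n+\rho-1}$. (h) If $f$ is twice differentiable and $0\le m\le f''(t)\le M$ for all $t\in[1/\rho,\rho]$, then for all $Q\in\mathcal P_n(\rho)$: $0\le\tfrac12m(n\|Q\|_2^2-1)\le D_f(Q\|U_n)\le\tfrac12M(n\|Q\|_2^2-1)\le\frac{M(\rho-1)^2}{8\rho}$, with equalities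 in the middle two inequalities for $\chi^2$ ($M=m=2$). (i) Let $d>0$. If $f$ is twice differentiable with $f''(t)\le M_f\in(0,\infty)$ for all $t>0$, then $D_f(Q\|U_n)\le d$ for all $Q\in\mathcal P_n(\rho)$ provided $\rho\le1+\frac{4d}{M_f}+\sqrt{\frac{8d}{M_f}+\frac{16d^2}{M_f^2}}$.
   Context: $\mathcal A_n:=\{1,\dots,n\}$, $\mathcal P_n$ is the set of probability mass functions on $\mathcal A_n$, $U_n$ is the uniform one, and for $\rho\ge1$, $\mathcal P_n(\rho)$ is the set of $Q\in\mathcal P_n$ with all masses positive and $q_{\max}/q_{\min}\le\rho$ ($q_{\max},q_{\min}$ the largest and smallest masses). $D_f(P\|Q)=\sum_xQ(x)f(P(x)/Q(x))$; $\|\cdot\|_2$ Euclidean norm. *)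

theory Defs
  imports "HOL-Analysis.Analysis"
begin

definition Pn :: "nat \<Rightarrow> (nat \<Rightarrow> real) set" where
  "Pn n = {p. (\<forall>x\<in>{1..n}. 0 \<le> p x) \<and> (\<forall>x. x \<notin> {1..n} \<longrightarrow> p x = 0)
              \<and> (\<Sum>x\<in>{1..n}. p x) = 1}"

definition Unif :: "nat \<Rightarrow> nat \<Rightarrow> real" where
  "Unif n = (\<lambda>x. if x \<in> {1..n} then 1 / real n else 0)"

definition qmax :: "nat \<Rightarrow> (nat \<Rightarrow> real) \<Rightarrow> real" where
  "qmax n q = Max (q ` {1..n})"

definition qmin :: "nat \<Rightarrow> (nat \<Rightarrow> real) \<Rightarrow> real" where
  "qmin n q = Min (q ` {1..n})"

definition Pn_rho :: "nat \<Rightarrow> real \<Rightarrow> (nat \<Rightarrow> real) set" where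
  "Pn_rho n \<rho> = {q \<in> Pn n. (\<forall>x\<in>{1..n}. 0 < q x) \<and> qmax n q / qmin n q \<le> \<rho>}"

definition Df :: "nat \<Rightarrow> (real \<Rightarrow> real) \<Rightarrow> (nat \<Rightarrow> real) \<Rightarrow> (nat \<Rightarrow> real) \<Rightarrow> real" where
  "Df n f P Q = (\<Sum>x\<in>{1..n}. Q x * f (P x / Q x))"

text \<open>Convexity of a set of functions (pointwise convex combinations), i.e. what the
  library notion convex unfolds to; nat => real carries no real_vector instance.\<close>
definition convex_fset :: "(nat \<Rightarrow> real) set \<Rightarrow> bool" where
  "convex_fset S \<longleftrightarrow> (\<forall>p\<in>S. \<forall>q\<in>S. \<forall>t::real. 0 \<le> t \<and> t \<le> 1 \<longrightarrow>
       (\<lambda>x. (1 - t) * p x + t * q x) \<in> S)"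

definition sqnorm2 :: "nat \<Rightarrow> (nat \<Rightarrow> real) \<Rightarrow> real" where
  "sqnorm2 n q = (\<Sum>x\<in>{1..n}. (q x)\<^sup>2)"

definition uf :: "(real \<Rightarrow> real) \<Rightarrow> nat \<Rightarrow> real \<Rightarrow> real" where
  "uf f n \<rho> = Sup ((\<lambda>Q. Df n f Q (Unif n)) ` Pn_rho n \<rho>)"

definition vf :: "(real \<Rightarrow> real) \<Rightarrow> nat \<Rightarrow> real \<Rightarrow> real" where
  "vf f n \<rho> = Sup ((\<lambda>Q. Df n f (Unif n) Q) ` Pn_rho n \<rho>)"

definition Gamma :: "nat \<Rightarrow> real \<Rightarrow> real set" where
  "Gamma n \<rho> = {1 / (1 + (real n - 1) * \<rho>) .. 1 / real n}"

definition ibeta :: "nat \<Rightarrow> real \<Rightarrow> real \<Rightarrow> nat" where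
  "ibeta n \<rho> \<beta> = nat \<lfloor>(1 - real n * \<beta>) / ((\<rho> - 1) * \<beta>)\<rfloor>"

definition Qbeta :: "nat \<Rightarrow> real \<Rightarrow> real \<Rightarrow> nat \<Rightarrow> real" where
  "Qbeta n \<rho> \<beta> = (\<lambda>j. let i = ibeta n \<rho> \<beta> in
      if j \<in> {1..n} then
        (if j \<le> i then \<rho> * \<beta>
         else if j = i + 1 then 1 - (real n + real i * (\<rho> - 1) - 1) * \<beta>
         else \<beta>)
      else 0)"

definition gf :: "(real \<Rightarrow> real) \<Rightarrow> real \<Rightarrow> real \<Rightarrow> real" where
  "gf f \<rho> x = x * f (\<rho> / (1 + (\<rho> - 1) * x)) + (1 - x) * f (1 / (1 + (\<rho> - 1) * x))"

definition fstar :: "(real \<Rightarrow> real) \<Rightarrow> real \<Rightarrow> real" where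
  "fstar f t = t * f (1 / t)"

definition f_at_0 :: "(real \<Rightarrow> real) \<Rightarrow> ereal" where
  "f_at_0 f = Lim (at_right 0) (\<lambda>t. ereal (f t))"

definition twice_diff_pos :: "(real \<Rightarrow> real) \<Rightarrow> bool" where
  "twice_diff_pos f \<longleftrightarrow> (\<forall>t>0. f differentiable (at t) \<and> (deriv f) differentiable (at t))"

end

theory Submission
  imports Defs
begin


lemma cvx:
  fixes f :: "real \<Rightarrow> real"
  assumes "convex_on {0<..} f" "0 < x" "0 < y" "0 \<le> u" "u \<le> 1"
  shows "f (u * x + (1 - u) * y) \<le> u * f x + (1 - u) * f y"
  using convex_onD[OF assms(1), of "1 - u" x y] assms(2-5) by simp

lemma fstar_convex:
  fixes f :: "real \<Rightarrow> real"
  assumes "convex_on {0<..} f"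
  shows "convex_on {0<..} (fstar f)"
proof -
  have "fstar f (u * x + v * y) \<le> u * fstar f x + v * fstar f y"
    if "x > 0" "y > 0" "u \<ge> 0" "v \<ge> 0" "u + v = 1" for x y u v :: real
  proof -
    define t where "t = u * x + v * y"
    have t: "t > 0" using that unfolding t_def
      by (smt (verit) mult_nonneg_nonneg mult_pos_pos)
    define w where "w = u * x / t"
    have w0: "0 \<le> w" "w \<le> 1" using that t unfolding w_def t_def
      by (auto simp: field_simps)
    have w1: "1 - w = v * y / t" using t that unfolding w_def t_def by (auto simp: field_simps)
    have e: "1 / t = w * (1 / x) + (1 - w) * (1 / y)"
      unfolding w1 unfolding w_def using t that by (auto simp: field_simps)
    have "f (1 / t) \<le> w * f (1/x) + (1 - w) * f (1/y)"
      unfolding e by (rule cvx[OF assms]) (use that w0 in auto)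
    hence "t * f (1 / t) \<le> t * (w * f (1/x) + (1 - w) * f (1/y))"
      using t by (simp add: mult_left_mono)
    also have "\<dots> = u * (x * f (1/x)) + v * (y * f (1/y))"
      unfolding w1 unfolding w_def using t by (simp add: field_simps)
    finally show ?thesis unfolding fstar_def t_def by simp
  qed
  thus ?thesis unfolding convex_on_def by (auto simp: convex_real_interval)
qed

lemma Pn_rho_iff:
  assumes "n \<ge> 1" "r \<ge> 1"
  shows "q \<in> Pn_rho n r \<longleftrightarrow> q \<in> Pn n \<and> (\<forall>x\<in>{1..n}. 0 < q x)
          \<and> (\<forall>x\<in>{1..n}. \<forall>y\<in>{1..n}. q x \<le> r * q y)"
proof -
  have ne: "q ` {1..n} \<noteq> {}" "finite (q ` {1..n})" using assms by auto
  show ?thesis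
  proof
    assume h: "q \<in> Pn_rho n r"
    hence pos: "\<forall>x\<in>{1..n}. 0 < q x" and P: "q \<in> Pn n" and rat: "qmax n q / qmin n q \<le> r"
      unfolding Pn_rho_def by auto
    have mpos: "qmin n q > 0" unfolding qmin_def using pos ne by (auto simp: Min_gr_iff)
    hence le: "qmax n q \<le> r * qmin n q" using rat by (simp add: pos_divide_le_eq)
    have "q x \<le> r * q y" if "x \<in> {1..n}" "y \<in> {1..n}" for x y
    proof -
      have "q x \<le> qmax n q" unfolding qmax_def using that ne by auto
      also have "\<dots> \<le> r * qmin n q" by (rule le)
      also have "\<dots> \<le> r * q y" unfolding qmin_def using that ne assms by (auto intro: mult_left_mono)
      finally show ?thesis .
    qed
    thus "q \<in> Pn n \<and> (\<forall>x\<in>{1..n}. 0 < q x) \<and> (\<forall>x\<in>{1..n}. \<forall>y\<in>{1..n}. q x \<le> r * q y)"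
      using pos P by auto
  next
    assume h: "q \<in> Pn n \<and> (\<forall>x\<in>{1..n}. 0 < q x) \<and> (\<forall>x\<in>{1..n}. \<forall>y\<in>{1..n}. q x \<le> r * q y)"
    obtain x0 where x0: "x0 \<in> {1..n}" "qmax n q = q x0" unfolding qmax_def using Max_in[OF ne(2) ne(1)] by auto
    obtain y0 where y0: "y0 \<in> {1..n}" "qmin n q = q y0" unfolding qmin_def using Min_in[OF ne(2) ne(1)] by auto
    have "qmax n q \<le> r * qmin n q" using h x0 y0 by auto
    moreover have "qmin n q > 0" using h y0 by auto
    ultimately have "qmax n q / qmin n q \<le> r" by (simp add: pos_divide_le_eq)
    thus "q \<in> Pn_rho n r" using h unfolding Pn_rho_def by auto
  qed
qed

lemma Pn_rho_box:
  assumes "n \<ge> 1" "r \<ge> 1" "q \<in> Pn n" "b > 0" "\<forall>x\<in>{1..n}. b \<le> q x \<and> q x \<le> r * b"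
  shows "q \<in> Pn_rho n r"
proof -
  have "q x \<le> r * q y" if "x \<in> {1..n}" "y \<in> {1..n}" for x y
    using assms that by (smt (verit) mult_left_mono)
  moreover have "\<forall>x\<in>{1..n}. 0 < q x" using assms by force
  ultimately show ?thesis using Pn_rho_iff[OF assms(1,2)] assms(3) by auto
qed

lemma Pn_rho_facts:
  assumes "n \<ge> 1" "r \<ge> 1" "q \<in> Pn_rho n r"
  shows "0 < qmin n q" "real n * qmin n q \<le> 1" "1 \<le> real n * r * qmin n q"
    "\<forall>x\<in>{1..n}. qmin n q \<le> q x \<and> q x \<le> r * qmin n q"
    "1 \<le> qmin n q * (1 + (real n - 1) * r)"
    "(\<Sum>x\<in>{1..n}. q x) = 1" "\<forall>x\<in>{1..n}. 0 < q x" "\<forall>x. x \<notin> {1..n} \<longrightarrow> q x = 0"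
proof -
  have ne: "q ` {1..n} \<noteq> {}" "finite (q ` {1..n})" using assms by auto
  have h: "q \<in> Pn n" "\<forall>x\<in>{1..n}. 0 < q x" "\<forall>x\<in>{1..n}. \<forall>y\<in>{1..n}. q x \<le> r * q y"
    using Pn_rho_iff[OF assms(1,2)] assms(3) by auto
  obtain y0 where y0: "y0 \<in> {1..n}" "qmin n q = q y0" unfolding qmin_def using Min_in[OF ne(2) ne(1)] by auto
  have mle: "\<forall>x\<in>{1..n}. qmin n q \<le> q x" unfolding qmin_def using ne by auto
  show s1: "(\<Sum>x\<in>{1..n}. q x) = 1" using h(1) unfolding Pn_def by auto
  show "\<forall>x\<in>{1..n}. 0 < q x" by (rule h(2))
  show "\<forall>x. x \<notin> {1..n} \<longrightarrow> q x = 0" using h(1) unfolding Pn_def by auto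
  show "0 < qmin n q" using y0 h by auto
  show "\<forall>x\<in>{1..n}. qmin n q \<le> q x \<and> q x \<le> r * qmin n q" using mle h y0 by auto
  have "(\<Sum>x\<in>{1..n}. qmin n q) \<le> (\<Sum>x\<in>{1..n}. q x)" by (rule sum_mono) (use mle in auto)
  thus "real n * qmin n q \<le> 1" using s1 by simp
  have "(\<Sum>x\<in>{1..n}. q x) \<le> (\<Sum>x\<in>{1..n}. r * qmin n q)" by (rule sum_mono) (use h y0 in auto)
  thus "1 \<le> real n * r * qmin n q" using s1 by simp
  have "(\<Sum>x\<in>{1..n}. q x) = q y0 + (\<Sum>x\<in>{1..n} - {y0}. q x)"
    using y0 by (simp add: sum.remove)
  also have "(\<Sum>x\<in>{1..n} - {y0}. q x) \<le> (\<Sum>x\<in>{1..n} - {y0}. r * qmin n q)"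
    by (rule sum_mono) (use h y0 in auto)
  also have "\<dots> = (real n - 1) * r * qmin n q" using y0 by (simp add: of_nat_diff)
  finally show "1 \<le> qmin n q * (1 + (real n - 1) * r)" using s1 y0 by (simp add: algebra_simps)
qed

lemma Df_U1:
  assumes "n \<ge> 1"
  shows "Df n f Q (Unif n) = (\<Sum>x\<in>{1..n}. f (real n * Q x)) / real n"
  unfolding Df_def Unif_def using assms by (simp add: sum_divide_distrib mult.commute)

lemma Df_U2:
  assumes "n \<ge> 1"
  shows "Df n f (Unif n) Q = (\<Sum>x\<in>{1..n}. fstar f (real n * Q x)) / real n"
  unfolding Df_def Unif_def fstar_def using assms
  by (auto simp: sum_divide_distrib intro!: sum.cong)



definition Phi :: "(real \<Rightarrow> real) \<Rightarrow> nat \<Rightarrow> (nat \<Rightarrow> real) \<Rightarrow> real" where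
  "Phi g n Q = (\<Sum>x\<in>{1..n}. g (real n * Q x)) / real n"

definition UU :: "(real \<Rightarrow> real) \<Rightarrow> nat \<Rightarrow> real \<Rightarrow> real" where
  "UU g n r = Sup (Phi g n ` Pn_rho n r)"

lemma uf_UU: "n \<ge> 1 \<Longrightarrow> uf f n r = UU f n r"
proof -
  assume "n \<ge> 1"
  hence "\<And>Q. Df n f Q (Unif n) = Phi f n Q" using Df_U1 unfolding Phi_def by auto
  thus ?thesis unfolding uf_def UU_def by simp
qed

lemma vf_UU: "n \<ge> 1 \<Longrightarrow> vf f n r = UU (fstar f) n r"
proof -
  assume "n \<ge> 1"
  hence "\<And>Q. Df n f (Unif n) Q = Phi (fstar f) n Q" using Df_U2 unfolding Phi_def by auto
  thus ?thesis unfolding vf_def UU_def by simp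
qed

lemma sum_split_nat:
  assumes "m \<le> n"
  shows "(\<Sum>x\<in>{1..n}. h x) = (\<Sum>x\<in>{1..m}. h x) + (\<Sum>x\<in>{Suc m..n}. h x)"
proof -
  have "{1..n} = {1..m} \<union> {Suc m..n}" using assms by auto
  moreover have "{1..m} \<inter> {Suc m..n} = {}" by auto
  ultimately show ?thesis by (simp add: sum.union_disjoint)
qed

lemma phi_cont:
  fixes g :: "real \<Rightarrow> real"
  assumes "convex_on {0<..} g"
  shows "continuous_on {0<..} g"
  by (rule convex_on_continuous) (auto simp: assms)

lemma gf_cont:
  fixes g :: "real \<Rightarrow> real"
  assumes "convex_on {0<..} g" "r \<ge> 1"
  shows "continuous_on {0..1} (gf g r)"
proof -
  have c: "continuous_on {0<..} g" by (rule phi_cont[OF assms(1)])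
  have d: "\<And>x. x \<in> {0..1::real} \<Longrightarrow> 1 + (r - 1) * x > 0" using assms(2)
    by (smt (verit) atLeastAtMost_iff mult_nonneg_nonneg)
  have dn: "\<forall>x\<in>{0..1::real}. 1 + (r - 1) * x \<noteq> 0" using d by force
  have c1: "continuous_on {0..1} (\<lambda>x. g (r / (1 + (r - 1) * x)))"
    apply (rule continuous_on_compose2[OF c])
    using d assms(2) by (auto intro!: continuous_intros simp: dn)
  have c2: "continuous_on {0..1} (\<lambda>x. g (1 / (1 + (r - 1) * x)))"
    apply (rule continuous_on_compose2[OF c])
    using d by (auto intro!: continuous_intros simp: dn)
  show ?thesis unfolding gf_def[abs_def] by (intro continuous_intros c1 c2)
qed

lemma gf_sup:
  assumes "convex_on {0<..} g" "r \<ge> 1"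
  shows "bdd_above (gf g r ` {0..1})" "\<exists>x\<in>{0..1}. gf g r x = Sup (gf g r ` {0..1})"
proof -
  have cpt: "compact (gf g r ` {0..1})"
    by (rule compact_continuous_image[OF gf_cont[OF assms]]) simp
  thus "bdd_above (gf g r ` {0..1})" by (simp add: bounded_imp_bdd_above compact_imp_bounded)
  obtain x where x: "x \<in> {0..1}" "\<forall>y\<in>{0..1}. gf g r y \<le> gf g r x"
    using continuous_attains_sup[OF compact_Icc _ gf_cont[OF assms]] by auto
  have "Sup (gf g r ` {0..1}) = gf g r x"
    by (rule cSup_eq_maximum) (use x in auto)
  thus "\<exists>x\<in>{0..1}. gf g r x = Sup (gf g r ` {0..1})" using x by auto
qed

lemma Phi_upper:
  assumes g: "convex_on {0<..} g" and n: "n \<ge> 1" and r: "r \<ge> 1" and Q: "Q \<in> Pn_rho n r"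
  shows "\<exists>X\<in>{0..1}. Phi g n Q \<le> gf g r X"
proof -
  define b where "b = qmin n Q"
  note F = Pn_rho_facts[OF n r Q, folded b_def]
  define a where "a = real n * b"
  have a0: "a > 0" "a \<le> 1" "1 \<le> r * a" using F n unfolding a_def by (auto simp: algebra_simps)
  have ya: "\<forall>x\<in>{1..n}. a \<le> real n * Q x \<and> real n * Q x \<le> r * a"
    using F n unfolding a_def by (auto simp: algebra_simps)
  have sQ: "(\<Sum>x\<in>{1..n}. real n * Q x) = real n" using F by (simp add: sum_distrib_left[symmetric])
  show ?thesis
  proof (cases "r = 1")
    case True
    hence "\<forall>x\<in>{1..n}. real n * Q x = a" using ya by force
    hence "(\<Sum>x\<in>{1..n}. real n * Q x) = real n * a" by simp
    hence a1: "a = 1" using sQ n by simp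
    have "Phi g n Q = g 1" unfolding Phi_def using \<open>\<forall>x\<in>{1..n}. real n * Q x = a\<close> a1 n by simp
    moreover have "gf g r 0 = g 1" unfolding gf_def by simp
    ultimately show ?thesis by (intro bexI[of _ 0]) auto
  next
    case False
    hence r1: "r > 1" using r by simp
    define lam where "lam x = (real n * Q x - a) / ((r - 1) * a)" for x
    have lam01: "0 \<le> lam x \<and> lam x \<le> 1" if "x \<in> {1..n}" for x
      using ya that r1 a0 unfolding lam_def by (auto simp: field_simps)
    have lamx: "real n * Q x = lam x * (r * a) + (1 - lam x) * a" for x
    proof -
      have "lam x * ((r - 1) * a) = real n * Q x - a" unfolding lam_def using r1 a0 by simp
      thus ?thesis by (simp add: algebra_simps)
    qed
    have "(\<Sum>x\<in>{1..n}. g (real n * Q x)) \<le> (\<Sum>x\<in>{1..n}. lam x * g (r * a) + (1 - lam x) * g a)"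
    proof (rule sum_mono)
      fix x assume "x \<in> {1..n}"
      thus "g (real n * Q x) \<le> lam x * g (r * a) + (1 - lam x) * g a"
        unfolding lamx using cvx[OF g, of "r * a" a "lam x"] lam01 a0 r1 by auto
    qed
    also have "\<dots> = (\<Sum>x\<in>{1..n}. lam x) * g (r * a) + (real n - (\<Sum>x\<in>{1..n}. lam x)) * g a"
      by (simp add: sum.distrib sum_distrib_right[symmetric] sum_subtractf left_diff_distrib)
    finally have I: "(\<Sum>x\<in>{1..n}. g (real n * Q x)) \<le> (\<Sum>x\<in>{1..n}. lam x) * g (r * a) + (real n - (\<Sum>x\<in>{1..n}. lam x)) * g a" .
    define X where "X = (1 - a) / ((r - 1) * a)"
    have sl: "(\<Sum>x\<in>{1..n}. lam x) = real n * X"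
    proof -
      have "(\<Sum>x\<in>{1..n}. lam x) = ((\<Sum>x\<in>{1..n}. real n * Q x) - real n * a) / ((r - 1) * a)"
        unfolding lam_def by (simp add: sum_divide_distrib[symmetric] sum_subtractf)
      thus ?thesis unfolding sQ X_def using r1 a0 by (simp add: field_simps)
    qed
    have X01: "X \<in> {0..1}" unfolding X_def using a0 r1 by (auto simp: field_simps)
    have D: "1 + (r - 1) * X = 1 / a" unfolding X_def using a0 r1 by (auto simp: field_simps)
    have "(\<Sum>x\<in>{1..n}. g (real n * Q x)) \<le> (X * g (r * a) + (1 - X) * g a) * real n"
      using I unfolding sl by (simp add: algebra_simps)
    hence "Phi g n Q \<le> X * g (r * a) + (1 - X) * g a"
      unfolding Phi_def using n by (simp add: pos_divide_le_eq)
    also have "\<dots> = gf g r X" unfolding gf_def D using a0 by simp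
    finally show ?thesis using X01 by auto
  qed
qed

lemma Phi_lower:
  assumes n: "n \<ge> 1" and r: "r \<ge> 1" and m: "m \<le> n"
  shows "\<exists>Q\<in>Pn_rho n r. Phi g n Q = gf g r (real m / real n)"
proof -
  define b where "b = 1 / (real m * r + (real n - real m))"
  have den: "real m * r + (real n - real m) > 0"
  proof (cases "m = n")
    case True thus ?thesis using n r by simp
  next
    case False thus ?thesis using m r by (smt (verit) mult_nonneg_nonneg of_nat_0_le_iff of_nat_less_iff le_neq_implies_less)
  qed
  have b0: "b > 0" unfolding b_def using den by simp
  define Q where "Q x = (if x \<in> {1..m} then r * b else if x \<in> {Suc m..n} then b else 0)" for x
  have s: "(\<Sum>x\<in>{1..n}. h (Q x)) = real m * h (r * b) + (real n - real m) * h b" for h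
  proof -
    have "(\<Sum>x\<in>{1..n}. h (Q x)) = (\<Sum>x\<in>{1..m}. h (Q x)) + (\<Sum>x\<in>{Suc m..n}. h (Q x))"
      by (rule sum_split_nat[OF m])
    also have "(\<Sum>x\<in>{1..m}. h (Q x)) = (\<Sum>x\<in>{1..m}. h (r * b))" by (rule sum.cong) (auto simp: Q_def)
    also have "(\<Sum>x\<in>{Suc m..n}. h (Q x)) = (\<Sum>x\<in>{Suc m..n}. h b)" by (rule sum.cong) (auto simp: Q_def)
    finally show ?thesis using m by (simp add: of_nat_diff)
  qed
  have "real m * (r * b) + (real n - real m) * b = b * (real m * r + (real n - real m))"
    by (simp add: algebra_simps)
  also have "\<dots> = 1" unfolding b_def using den by simp
  finally have "(\<Sum>x\<in>{1..n}. Q x) = 1" using s[of "\<lambda>t. t"] by simp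
  moreover have "\<forall>x\<in>{1..n}. 0 \<le> Q x" "\<forall>x. x \<notin> {1..n} \<longrightarrow> Q x = 0" using b0 r m by (auto simp: Q_def)
  ultimately have QP: "Q \<in> Pn n" unfolding Pn_def by auto
  have "\<forall>x\<in>{1..n}. b \<le> Q x \<and> Q x \<le> r * b" using b0 r by (auto simp: Q_def)
  hence QR: "Q \<in> Pn_rho n r" using Pn_rho_box[OF n r QP b0] by auto
  have e1: "r / (1 + (r - 1) * (real m / real n)) = real n * (r * b)"
    unfolding b_def using n den by (simp add: field_simps)
  have e2: "1 / (1 + (r - 1) * (real m / real n)) = real n * b"
    unfolding b_def using n den by (simp add: field_simps)
  have "Phi g n Q = gf g r (real m / real n)"
    unfolding Phi_def gf_def e1 e2 s[of "\<lambda>t. g (real n * t)"] using n by (simp add: field_simps)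
  thus ?thesis using QR by auto
qed

lemma Unif_in: "n \<ge> 1 \<Longrightarrow> r \<ge> 1 \<Longrightarrow> Unif n \<in> Pn_rho n r"
  apply (rule Pn_rho_box[of n r _ "1 / real n"])
  by (auto simp: Pn_def Unif_def divide_right_mono)

lemma UU_props:
  assumes g: "convex_on {0<..} g" and n: "n \<ge> 1" and r: "r \<ge> 1"
  shows "bdd_above (Phi g n ` Pn_rho n r)" "\<And>Q. Q \<in> Pn_rho n r \<Longrightarrow> Phi g n Q \<le> UU g n r"
    "\<And>m. m \<le> n \<Longrightarrow> gf g r (real m / real n) \<le> UU g n r"
    "UU g n r \<le> Sup (gf g r ` {0..1})"
proof -
  have ne: "Pn_rho n r \<noteq> {}" using Unif_in[OF n r] by auto
  have bd: "\<And>Q. Q \<in> Pn_rho n r \<Longrightarrow> Phi g n Q \<le> Sup (gf g r ` {0..1})"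
  proof -
    fix Q assume "Q \<in> Pn_rho n r"
    then obtain X where "X \<in> {0..1}" "Phi g n Q \<le> gf g r X" using Phi_upper[OF g n r] by blast
    moreover have "gf g r X \<le> Sup (gf g r ` {0..1})"
      using cSup_upper[OF _ gf_sup(1)[OF g r]] \<open>X \<in> {0..1}\<close> by auto
    ultimately show "Phi g n Q \<le> Sup (gf g r ` {0..1})" by simp
  qed
  show bdd: "bdd_above (Phi g n ` Pn_rho n r)" using bd by (auto simp: bdd_above_def)
  show up: "\<And>Q. Q \<in> Pn_rho n r \<Longrightarrow> Phi g n Q \<le> UU g n r"
    unfolding UU_def using bdd by (auto intro: cSup_upper)
  show "\<And>m. m \<le> n \<Longrightarrow> gf g r (real m / real n) \<le> UU g n r"
    using Phi_lower[OF n r] up by metis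
  show "UU g n r \<le> Sup (gf g r ` {0..1})"
    unfolding UU_def using ne bd by (auto intro: cSup_least)
qed



lemma Qbeta_facts:
  assumes n: "n \<ge> 2" and r: "r > 1" and bG: "\<beta> \<in> Gamma n r"
  defines "s \<equiv> (1 - real n * \<beta>) / ((r - 1) * \<beta>)"
  defines "i \<equiv> ibeta n r \<beta>"
  defines "c \<equiv> 1 - (real n + real i * (r - 1) - 1) * \<beta>"
  shows "\<beta> > 0" "0 \<le> s" "s \<le> real n - 1" "i = nat \<lfloor>s\<rfloor>" "i + 1 \<le> n"
    "c = \<beta> + (s - real i) * (r - 1) * \<beta>" "\<beta> \<le> c" "c \<le> r * \<beta>"
    "\<And>h::real\<Rightarrow>real. (\<Sum>j\<in>{1..n}. h (Qbeta n r \<beta> j)) = real i * h (r * \<beta>) + h c + (real n - real i - 1) * h \<beta>"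
    "Qbeta n r \<beta> \<in> Pn_rho n r"
proof -
  have den: "1 + (real n - 1) * r > 0" using n r by (smt (verit) mult_nonneg_nonneg of_nat_1 of_nat_le_iff one_le_numeral order.trans)
  have b1: "1 / (1 + (real n - 1) * r) \<le> \<beta>" "\<beta> \<le> 1 / real n" using bG unfolding Gamma_def by auto
  show bpos: "\<beta> > 0" using b1 den by (smt (verit) divide_pos_pos)
  have b2: "1 \<le> \<beta> * (1 + (real n - 1) * r)" using b1 den by (simp add: divide_le_eq mult.commute)
  have b3: "real n * \<beta> \<le> 1" using b1 n by (simp add: le_divide_eq mult.commute)
  have rb: "(r - 1) * \<beta> > 0" using r bpos by simp
  show s0: "0 \<le> s" unfolding s_def using b3 rb by simp
  have "1 - real n * \<beta> \<le> (real n - 1) * ((r - 1) * \<beta>)" using b2 by (simp add: algebra_simps)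
  thus sn: "s \<le> real n - 1" unfolding s_def using rb by (simp add: divide_le_eq)
  show ii: "i = nat \<lfloor>s\<rfloor>" unfolding i_def ibeta_def s_def by (rule refl)
  have fl: "real i \<le> s" "s < real i + 1" unfolding ii using s0 by linarith+
  have "real i \<le> real n - 1" using fl sn by linarith
  thus "i + 1 \<le> n" using n by linarith
  hence i1: "i + 1 \<le> n" .
  have e: "s * ((r - 1) * \<beta>) = 1 - real n * \<beta>" unfolding s_def using rb bpos r by simp
  show cs: "c = \<beta> + (s - real i) * (r - 1) * \<beta>" unfolding c_def using e by (simp add: algebra_simps)
  show "\<beta> \<le> c" unfolding cs using fl rb by (simp add: mult.assoc)
  have "(s - real i) * ((r - 1) * \<beta>) \<le> 1 * ((r - 1) * \<beta>)"
    by (rule mult_right_mono) (use fl rb in auto)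
  thus "c \<le> r * \<beta>" unfolding cs by (simp add: algebra_simps)
  show S: "\<And>h::real\<Rightarrow>real. (\<Sum>j\<in>{1..n}. h (Qbeta n r \<beta> j)) = real i * h (r * \<beta>) + h c + (real n - real i - 1) * h \<beta>"
  proof -
    fix h :: "real \<Rightarrow> real"
    have "(\<Sum>j\<in>{1..n}. h (Qbeta n r \<beta> j)) = (\<Sum>j\<in>{1..i}. h (Qbeta n r \<beta> j)) + (\<Sum>j\<in>{Suc i..n}. h (Qbeta n r \<beta> j))"
      by (rule sum_split_nat) (use i1 in simp)
    also have "(\<Sum>j\<in>{Suc i..n}. h (Qbeta n r \<beta> j)) = h (Qbeta n r \<beta> (Suc i)) + (\<Sum>j\<in>{Suc (Suc i)..n}. h (Qbeta n r \<beta> j))"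
      by (rule sum.atLeast_Suc_atMost) (use i1 in simp)
    also have "(\<Sum>j\<in>{1..i}. h (Qbeta n r \<beta> j)) = (\<Sum>j\<in>{1..i}. h (r * \<beta>))"
      by (rule sum.cong) (use i1 in \<open>auto simp: Qbeta_def i_def Let_def\<close>)
    also have "(\<Sum>j\<in>{Suc (Suc i)..n}. h (Qbeta n r \<beta> j)) = (\<Sum>j\<in>{Suc (Suc i)..n}. h \<beta>)"
      by (rule sum.cong) (use i1 in \<open>auto simp: Qbeta_def i_def Let_def\<close>)
    also have "Qbeta n r \<beta> (Suc i) = c" using i1 by (simp add: Qbeta_def i_def c_def Let_def)
    finally show "(\<Sum>j\<in>{1..n}. h (Qbeta n r \<beta> j)) = real i * h (r * \<beta>) + h c + (real n - real i - 1) * h \<beta>"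
      using i1 by (simp add: of_nat_diff algebra_simps)
  qed
  have box: "\<forall>x\<in>{1..n}. \<beta> \<le> Qbeta n r \<beta> x \<and> Qbeta n r \<beta> x \<le> r * \<beta>"
    using \<open>\<beta> \<le> c\<close> \<open>c \<le> r * \<beta>\<close> bpos r
    by (auto simp: Qbeta_def i_def[symmetric] c_def[symmetric] Let_def)
  have "(\<Sum>j\<in>{1..n}. Qbeta n r \<beta> j) = 1" unfolding S[of "\<lambda>t. t"] c_def by (simp add: algebra_simps)
  hence "Qbeta n r \<beta> \<in> Pn n" using box bpos unfolding Pn_def
    by (auto simp: Qbeta_def Let_def)
  thus "Qbeta n r \<beta> \<in> Pn_rho n r" using Pn_rho_box[of n r _ \<beta>] box bpos n r by auto
qed



lemma base_case:
  fixes \<psi> :: "real \<Rightarrow> real"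
  assumes n: "n \<ge> 2" and r: "r > 1" and bG: "\<beta> \<in> Gamma n r"
    and box: "\<forall>x\<in>{1..n}. \<beta> \<le> Q x \<and> Q x \<le> r * \<beta>" and sQ: "(\<Sum>x\<in>{1..n}. Q x) = 1"
    and cI: "card {x\<in>{1..n}. \<beta> < Q x \<and> Q x < r * \<beta>} \<le> 1"
  shows "(\<Sum>x\<in>{1..n}. \<psi> (Q x)) = (\<Sum>j\<in>{1..n}. \<psi> (Qbeta n r \<beta> j))"
proof -
  define s where "s = (1 - real n * \<beta>) / ((r - 1) * \<beta>)"
  define i where "i = ibeta n r \<beta>"
  define c where "c = 1 - (real n + real i * (r - 1) - 1) * \<beta>"
  note F = Qbeta_facts[OF n r bG, folded s_def i_def, folded c_def]
  have bpos: "\<beta> > 0" by (rule F(1))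
  have rb: "(r - 1) * \<beta> > 0" using r bpos by simp
  define P where "P = {x\<in>{1..n}. Q x = r * \<beta>}"
  define I where "I = {x\<in>{1..n}. \<beta> < Q x \<and> Q x < r * \<beta>}"
  define R where "R = {x\<in>{1..n}. Q x = \<beta>}"
  have un: "{1..n} = P \<union> I \<union> R" using box unfolding P_def I_def R_def by force
  have d1: "P \<inter> I = {}" "(P \<union> I) \<inter> R = {}" unfolding P_def I_def R_def using r bpos by auto
  have fin: "finite P" "finite I" "finite R" unfolding P_def I_def R_def by auto
  have gs: "(\<Sum>x\<in>{1..n}. h (Q x)) = real (card P) * h (r * \<beta>) + (\<Sum>x\<in>I. h (Q x)) + real (card R) * h \<beta>"
    for h :: "real \<Rightarrow> real"
  proof -
    have "(\<Sum>x\<in>{1..n}. h (Q x)) = (\<Sum>x\<in>P. h (Q x)) + (\<Sum>x\<in>I. h (Q x)) + (\<Sum>x\<in>R. h (Q x))"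
      unfolding un using fin d1 by (simp add: sum.union_disjoint)
    also have "(\<Sum>x\<in>P. h (Q x)) = (\<Sum>x\<in>P. h (r * \<beta>))" by (rule sum.cong) (auto simp: P_def)
    also have "(\<Sum>x\<in>R. h (Q x)) = (\<Sum>x\<in>R. h \<beta>)" by (rule sum.cong) (auto simp: R_def)
    finally show ?thesis by simp
  qed
  have cn: "real (card P) + real (card I) + real (card R) = real n"
    using gs[of "\<lambda>_. 1"] by simp
  have sq: "real (card P) * (r * \<beta>) + (\<Sum>x\<in>I. Q x) + real (card R) * \<beta> = 1"
    using gs[of "\<lambda>t. t"] sQ by simp
  have cI': "card I \<le> 1" using cI unfolding I_def .
  show ?thesis
  proof (cases "I = {}")
    case True
    have cR: "real (card R) = real n - real (card P)" using cn True by simp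
    have "real (card P) * ((r - 1) * \<beta>) = 1 - real n * \<beta>"
      using sq True unfolding cR by (simp add: algebra_simps)
    hence "s = real (card P) * ((r - 1) * \<beta>) / ((r - 1) * \<beta>)" unfolding s_def by simp
    hence sp: "s = real (card P)" using rb r bpos by simp
    have ip: "i = card P" using F(4) unfolding sp by simp
    have cb: "c = \<beta>" using F(6) unfolding sp ip by simp
    have "real (card P) * \<psi> (r * \<beta>) + (\<Sum>x\<in>I. \<psi> (Q x)) + real (card R) * \<psi> \<beta> =
      real i * \<psi> (r * \<beta>) + \<psi> c + (real n - real i - 1) * \<psi> \<beta>"
      unfolding cR ip cb using True by (simp add: algebra_simps)
    thus ?thesis unfolding gs F(9) .
  next
    case False
    then obtain z where z: "I = {z}" using cI' by (metis card_0_eq card_1_singletonE fin(2) le_Suc_eq le_zero_eq One_nat_def)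
    have zI: "z \<in> I" using z by simp
    have cz: "\<beta> < Q z" "Q z < r * \<beta>" using zI unfolding I_def by auto
    have cR: "real (card R) = real n - real (card P) - 1" using cn z by simp
    have "real (card P) * ((r - 1) * \<beta>) + (Q z - \<beta>) = 1 - real n * \<beta>"
      using sq z unfolding cR by (simp add: algebra_simps)
    hence "s = (real (card P) * ((r - 1) * \<beta>) + (Q z - \<beta>)) / ((r - 1) * \<beta>)" unfolding s_def by simp
    hence sp: "s = real (card P) + (Q z - \<beta>) / ((r - 1) * \<beta>)" using rb r bpos
      by (simp add: add_divide_distrib)
    have fr: "0 < (Q z - \<beta>) / ((r - 1) * \<beta>)" "(Q z - \<beta>) / ((r - 1) * \<beta>) < 1"
      using cz rb by (auto simp: field_simps)
    have "\<lfloor>s\<rfloor> = int (card P)" by (rule floor_unique) (use sp fr in auto)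
    hence ip: "i = card P" using F(4) by simp
    have "(s - real i) * ((r - 1) * \<beta>) = Q z - \<beta>" unfolding sp ip using rb r bpos by simp
    hence cb: "c = Q z" using F(6) by (simp add: mult.assoc)
    have "real (card P) * \<psi> (r * \<beta>) + (\<Sum>x\<in>I. \<psi> (Q x)) + real (card R) * \<psi> \<beta> =
      real i * \<psi> (r * \<beta>) + \<psi> c + (real n - real i - 1) * \<psi> \<beta>"
      unfolding cR ip cb using z by (simp add: algebra_simps)
    thus ?thesis unfolding gs F(9) .
  qed
qed

lemma sum_two_delta:
  assumes "j \<in> A" "k \<in> A" "j \<noteq> k" "finite A"
  shows "(\<Sum>x\<in>A. (if x = j then a else if x = k then b else 0)) = a + (b::real)"
proof -
  have "(\<Sum>x\<in>A. (if x = j then a else if x = k then b else 0)) = (\<Sum>x\<in>A. (if x = j then a else 0) + (if x = k then b else 0))"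
    by (rule sum.cong) (use assms in auto)
  also have "\<dots> = a + b" using assms by (simp add: sum.distrib)
  finally show ?thesis .
qed

lemma smooth:
  fixes \<psi> :: "real \<Rightarrow> real"
  assumes cv: "\<And>x y u. 0 < x \<Longrightarrow> 0 < y \<Longrightarrow> 0 \<le> u \<Longrightarrow> u \<le> 1 \<Longrightarrow> \<psi> (u * x + (1 - u) * y) \<le> u * \<psi> x + (1 - u) * \<psi> y"
    and n: "n \<ge> 2" and r: "r > 1" and bG: "\<beta> \<in> Gamma n r"
  shows "card {x\<in>{1..n}. \<beta> < Q x \<and> Q x < r * \<beta>} \<le> k \<Longrightarrow> \<forall>x\<in>{1..n}. \<beta> \<le> Q x \<and> Q x \<le> r * \<beta> \<Longrightarrow>
    (\<Sum>x\<in>{1..n}. Q x) = 1 \<Longrightarrow> (\<Sum>x\<in>{1..n}. \<psi> (Q x)) \<le> (\<Sum>j\<in>{1..n}. \<psi> (Qbeta n r \<beta> j))"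
proof (induction k arbitrary: Q)
  case 0
  have "card {x\<in>{1..n}. \<beta> < Q x \<and> Q x < r * \<beta>} \<le> 1" using 0(1) by linarith
  from base_case[OF n r bG 0(2) 0(3) this, of \<psi>] show ?case by linarith
next
  case (Suc k)
  define I where "I = {x\<in>{1..n}. \<beta> < Q x \<and> Q x < r * \<beta>}"
  have bpos: "\<beta> > 0" using Qbeta_facts(1)[OF n r bG] .
  have box: "\<forall>x\<in>{1..n}. \<beta> \<le> Q x \<and> Q x \<le> r * \<beta>" by (rule Suc.prems(2))
  have sQ: "(\<Sum>x\<in>{1..n}. Q x) = 1" by (rule Suc.prems(3))
  show ?case
  proof (cases "card I \<le> 1")
    case True
    thus ?thesis using base_case[OF n r bG box sQ, of \<psi>] unfolding I_def by simp
  next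
    case False
    have finI: "finite I" unfolding I_def by simp
    obtain j where j: "j \<in> I" using False by (metis card.empty ex_in_conv zero_le)
    have "card (I - {j}) \<ge> 1" using False j finI by (simp add: card_Diff_singleton)
    then obtain k' where k': "k' \<in> I" "k' \<noteq> j" by (metis Diff_iff card.empty ex_in_conv not_one_le_zero singletonI)
    have jI: "j \<in> {1..n}" "\<beta> < Q j" "Q j < r * \<beta>" using j unfolding I_def by auto
    have kI: "k' \<in> {1..n}" "\<beta> < Q k'" "Q k' < r * \<beta>" using k' unfolding I_def by auto
    define d1 where "d1 = min (r * \<beta> - Q j) (Q k' - \<beta>)"
    define d2 where "d2 = min (Q j - \<beta>) (r * \<beta> - Q k')"
    have d1p: "d1 > 0" and d2p: "d2 > 0" unfolding d1_def d2_def using jI kI by auto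
    define Q1 where "Q1 x = Q x + (if x = j then d1 else if x = k' then - d1 else 0)" for x
    define Q2 where "Q2 x = Q x + (if x = j then - d2 else if x = k' then d2 else 0)" for x
    define lam where "lam = d2 / (d1 + d2)"
    have lam01: "0 \<le> lam" "lam \<le> 1" unfolding lam_def using d1p d2p by auto
    have lamd: "lam * d1 = (1 - lam) * d2" unfolding lam_def using d1p d2p by (simp add: field_simps)
    have Qc: "Q x = lam * Q1 x + (1 - lam) * Q2 x" for x
      unfolding Q1_def Q2_def using lamd k'(2) by (auto simp: algebra_simps)
    have box1: "\<forall>x\<in>{1..n}. \<beta> \<le> Q1 x \<and> Q1 x \<le> r * \<beta>"
      using box jI kI k'(2) d1p unfolding Q1_def d1_def by auto
    have box2: "\<forall>x\<in>{1..n}. \<beta> \<le> Q2 x \<and> Q2 x \<le> r * \<beta>"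
      using box jI kI k'(2) d2p unfolding Q2_def d2_def by auto
    have s1: "(\<Sum>x\<in>{1..n}. Q1 x) = 1"
      unfolding Q1_def sum.distrib sQ using sum_two_delta[OF jI(1) kI(1) k'(2)[symmetric], of d1 "-d1"] by simp
    have s2: "(\<Sum>x\<in>{1..n}. Q2 x) = 1"
      unfolding Q2_def sum.distrib sQ using sum_two_delta[OF jI(1) kI(1) k'(2)[symmetric], of "-d2" d2] by simp
    have cardI: "card I \<le> Suc k" using Suc.prems(1) unfolding I_def .
    have c1: "card {x\<in>{1..n}. \<beta> < Q1 x \<and> Q1 x < r * \<beta>} \<le> k"
    proof -
      have sub: "{x\<in>{1..n}. \<beta> < Q1 x \<and> Q1 x < r * \<beta>} \<subseteq> I"
        unfolding I_def using j k' unfolding I_def Q1_def by auto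
      have "j \<notin> {x\<in>{1..n}. \<beta> < Q1 x \<and> Q1 x < r * \<beta>} \<or> k' \<notin> {x\<in>{1..n}. \<beta> < Q1 x \<and> Q1 x < r * \<beta>}"
        unfolding Q1_def d1_def using k'(2) by auto
      hence "{x\<in>{1..n}. \<beta> < Q1 x \<and> Q1 x < r * \<beta>} \<subset> I" using sub j k' by auto
      hence "card {x\<in>{1..n}. \<beta> < Q1 x \<and> Q1 x < r * \<beta>} < card I" using finI by (simp add: psubset_card_mono)
      thus ?thesis using cardI by simp
    qed
    have c2: "card {x\<in>{1..n}. \<beta> < Q2 x \<and> Q2 x < r * \<beta>} \<le> k"
    proof -
      have sub: "{x\<in>{1..n}. \<beta> < Q2 x \<and> Q2 x < r * \<beta>} \<subseteq> I"
        unfolding I_def using j k' unfolding I_def Q2_def by auto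
      have "j \<notin> {x\<in>{1..n}. \<beta> < Q2 x \<and> Q2 x < r * \<beta>} \<or> k' \<notin> {x\<in>{1..n}. \<beta> < Q2 x \<and> Q2 x < r * \<beta>}"
        unfolding Q2_def d2_def using k'(2) by auto
      hence "{x\<in>{1..n}. \<beta> < Q2 x \<and> Q2 x < r * \<beta>} \<subset> I" using sub j k' by auto
      hence "card {x\<in>{1..n}. \<beta> < Q2 x \<and> Q2 x < r * \<beta>} < card I" using finI by (simp add: psubset_card_mono)
      thus ?thesis using cardI by simp
    qed
    have IH1: "(\<Sum>x\<in>{1..n}. \<psi> (Q1 x)) \<le> (\<Sum>j\<in>{1..n}. \<psi> (Qbeta n r \<beta> j))" by (rule Suc.IH[OF c1 box1 s1])
    have IH2: "(\<Sum>x\<in>{1..n}. \<psi> (Q2 x)) \<le> (\<Sum>j\<in>{1..n}. \<psi> (Qbeta n r \<beta> j))" by (rule Suc.IH[OF c2 box2 s2])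
    have "(\<Sum>x\<in>{1..n}. \<psi> (Q x)) \<le> (\<Sum>x\<in>{1..n}. lam * \<psi> (Q1 x) + (1 - lam) * \<psi> (Q2 x))"
    proof (rule sum_mono)
      fix x assume x: "x \<in> {1..n}"
      have "Q1 x > 0" "Q2 x > 0" using box1 box2 x bpos by force+
      thus "\<psi> (Q x) \<le> lam * \<psi> (Q1 x) + (1 - lam) * \<psi> (Q2 x)"
        unfolding Qc[of x] using cv lam01 by blast
    qed
    also have "\<dots> = lam * (\<Sum>x\<in>{1..n}. \<psi> (Q1 x)) + (1 - lam) * (\<Sum>x\<in>{1..n}. \<psi> (Q2 x))"
      by (simp add: sum.distrib sum_distrib_left)
    also have "\<dots> \<le> lam * (\<Sum>j\<in>{1..n}. \<psi> (Qbeta n r \<beta> j)) + (1 - lam) * (\<Sum>j\<in>{1..n}. \<psi> (Qbeta n r \<beta> j))"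
      by (intro add_mono mult_left_mono IH1 IH2) (use lam01 in auto)
    also have "\<dots> = (\<Sum>j\<in>{1..n}. \<psi> (Qbeta n r \<beta> j))" by (simp add: algebra_simps)
    finally show ?thesis .
  qed
qed

lemma Phi_extremal:
  fixes g :: "real \<Rightarrow> real"
  assumes g: "convex_on {0<..} g" and n: "n \<ge> 2" and r: "r > 1" and Q: "Q \<in> Pn_rho n r"
  shows "qmin n Q \<in> Gamma n r" "Phi g n Q \<le> Phi g n (Qbeta n r (qmin n Q))"
proof -
  have n1: "n \<ge> 1" using n by simp
  note F = Pn_rho_facts[OF n1 _ Q] 
  have F': "0 < qmin n Q" "real n * qmin n Q \<le> 1" "\<forall>x\<in>{1..n}. qmin n Q \<le> Q x \<and> Q x \<le> r * qmin n Q"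
    "1 \<le> qmin n Q * (1 + (real n - 1) * r)" "(\<Sum>x\<in>{1..n}. Q x) = 1"
    using F r by auto
  have den: "1 + (real n - 1) * r > 0" using n r by (smt (verit) mult_nonneg_nonneg of_nat_1 of_nat_le_iff one_le_numeral order.trans)
  show bG: "qmin n Q \<in> Gamma n r" unfolding Gamma_def using F' den n
    by (auto simp: divide_le_eq le_divide_eq mult.commute)
  have cv: "g (real n * (u * x + (1 - u) * y)) \<le> u * g (real n * x) + (1 - u) * g (real n * y)"
    if "0 < x" "0 < y" "0 \<le> u" "u \<le> 1" for x y u
  proof -
    have "real n * (u * x + (1 - u) * y) = u * (real n * x) + (1 - u) * (real n * y)" by (simp add: algebra_simps)
    thus ?thesis using cvx[OF g, of "real n * x" "real n * y" u] that n by simp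
  qed
  have cn: "card {x\<in>{1..n}. qmin n Q < Q x \<and> Q x < r * qmin n Q} \<le> n"
    by (rule order.trans[OF card_mono[of "{1..n}"]]) auto
  have "(\<Sum>x\<in>{1..n}. g (real n * Q x)) \<le> (\<Sum>j\<in>{1..n}. g (real n * Qbeta n r (qmin n Q) j))"
    by (rule smooth[where \<psi> = "\<lambda>t. g (real n * t)", OF cv n r bG, of Q n]) (use F' cn in auto)
  thus "Phi g n Q \<le> Phi g n (Qbeta n r (qmin n Q))" unfolding Phi_def using n by (simp add: divide_right_mono)
qed



lemma cont_coord: "continuous_on S (\<lambda>q::nat \<Rightarrow> real. q x)"
  by (rule continuous_on_subset[OF continuous_on_product_coordinates]) simp

lemma Pn_rho_convex:
  assumes n: "n \<ge> 1" and r: "r \<ge> 1"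
  shows "convex_fset (Pn_rho n r)"
  unfolding convex_fset_def
proof (intro ballI allI impI)
  fix p q and t :: real
  assume p: "p \<in> Pn_rho n r" and q: "q \<in> Pn_rho n r" and t: "0 \<le> t \<and> t \<le> 1"
  have P: "p \<in> Pn n" "\<forall>x\<in>{1..n}. 0 < p x" "\<forall>x\<in>{1..n}. \<forall>y\<in>{1..n}. p x \<le> r * p y"
    using p Pn_rho_iff[OF n r] by auto
  have Q: "q \<in> Pn n" "\<forall>x\<in>{1..n}. 0 < q x" "\<forall>x\<in>{1..n}. \<forall>y\<in>{1..n}. q x \<le> r * q y"
    using q Pn_rho_iff[OF n r] by auto
  define w where "w = (\<lambda>x. (1 - t) * p x + t * q x)"
  have "(\<Sum>x\<in>{1..n}. w x) = (1 - t) * (\<Sum>x\<in>{1..n}. p x) + t * (\<Sum>x\<in>{1..n}. q x)"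
    unfolding w_def by (simp add: sum.distrib sum_distrib_left)
  also have "\<dots> = 1" using P(1) Q(1) unfolding Pn_def by auto
  finally have ws: "(\<Sum>x\<in>{1..n}. w x) = 1" .
  have wpos: "\<forall>x\<in>{1..n}. 0 < w x"
  proof
    fix x assume x: "x \<in> {1..n}"
    show "0 < w x"
    proof (cases "t = 1")
      case True thus ?thesis using Q(2) x unfolding w_def by simp
    next
      case False
      hence "0 < (1 - t) * p x" using t P(2) x by simp
      moreover have "0 < q x" using Q(2) x by auto
      hence "0 \<le> t * q x" using t by simp
      ultimately show ?thesis unfolding w_def by simp
    qed
  qed
  have "w \<in> Pn n" using ws wpos P(1) Q(1) unfolding Pn_def w_def by force
  moreover have "\<forall>x\<in>{1..n}. \<forall>y\<in>{1..n}. w x \<le> r * w y"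
  proof (intro ballI)
    fix x y assume "x \<in> {1..n}" "y \<in> {1..n}"
    hence "(1 - t) * p x \<le> (1 - t) * (r * p y)" "t * q x \<le> t * (r * q y)"
      using P(3) Q(3) t by (auto intro: mult_left_mono)
    thus "w x \<le> r * w y" unfolding w_def by (simp add: algebra_simps)
  qed
  ultimately show "(\<lambda>x. (1 - t) * p x + t * q x) \<in> Pn_rho n r"
    using Pn_rho_iff[OF n r] wpos unfolding w_def by auto
qed

lemma Pn_rho_compact:
  assumes n: "n \<ge> 1" and r: "r \<ge> 1"
  shows "compact (Pn_rho n r)"
proof -
  define S where "S = (\<lambda>x::nat. if x \<in> {1..n} then {0..1::real} else {0})"
  define K where "K = PiE UNIV S"
  have "compactin (product_topology (\<lambda>i. euclidean) UNIV) K"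
    unfolding K_def by (simp add: compactin_PiE S_def)
  hence cK: "compact K" by (metis compactin_euclidean_iff euclidean_product_topology)
  define C where "C = {q::nat\<Rightarrow>real. (\<Sum>x\<in>{1..n}. q x) = 1} \<inter> (\<Inter>x\<in>{1..n}. \<Inter>y\<in>{1..n}. {q. q x \<le> r * q y})"
  have cC: "closed C" unfolding C_def
    by (intro closed_Int closed_INT ballI closed_Collect_eq closed_Collect_le continuous_intros cont_coord)
  have "Pn_rho n r = K \<inter> C"
  proof (intro set_eqI iffI)
    fix q assume q: "q \<in> Pn_rho n r"
    have h: "q \<in> Pn n" "\<forall>x\<in>{1..n}. 0 < q x" "\<forall>x\<in>{1..n}. \<forall>y\<in>{1..n}. q x \<le> r * q y"
      using q Pn_rho_iff[OF n r] by auto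
    have s1: "(\<Sum>x\<in>{1..n}. q x) = 1" and z: "\<forall>x. x \<notin> {1..n} \<longrightarrow> q x = 0" using h(1) unfolding Pn_def by auto
    have "q x \<le> 1" if "x \<in> {1..n}" for x
      using member_le_sum[of x "{1..n}" q] that h(2) s1 by (simp add: less_imp_le)
    hence "q \<in> K" unfolding K_def S_def using h(2) z by (auto simp: PiE_iff less_imp_le)
    moreover have "q \<in> C" unfolding C_def using s1 h(3) by auto
    ultimately show "q \<in> K \<inter> C" by simp
  next
    fix q assume q: "q \<in> K \<inter> C"
    have qK: "\<And>i. q i \<in> S i" using q unfolding K_def by (auto simp: PiE_iff)
    have nn: "\<forall>x\<in>{1..n}. 0 \<le> q x"
    proof
      fix x assume "x \<in> {1..n}" thus "0 \<le> q x" using qK[of x] by (simp add: S_def)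
    qed
    have z: "\<forall>x. x \<notin> {1..n} \<longrightarrow> q x = 0"
    proof (intro allI impI)
      fix x assume "x \<notin> {1..n}" thus "q x = 0" using qK[of x] unfolding S_def by (simp only: if_False) simp
    qed
    have s1: "(\<Sum>x\<in>{1..n}. q x) = 1" and le: "\<forall>x\<in>{1..n}. \<forall>y\<in>{1..n}. q x \<le> r * q y"
      using q unfolding C_def by auto
    have "\<exists>y0\<in>{1..n}. q y0 > 0"
    proof (rule ccontr)
      assume "\<not> (\<exists>y0\<in>{1..n}. q y0 > 0)"
      hence "\<forall>x\<in>{1..n}. q x = 0" using nn by force
      hence "(\<Sum>x\<in>{1..n}. q x) = 0" by simp
      thus False using s1 by simp
    qed
    then obtain y0 where y0: "y0 \<in> {1..n}" "q y0 > 0" by blast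
    have pos: "\<forall>x\<in>{1..n}. 0 < q x"
    proof
      fix x assume "x \<in> {1..n}"
      hence "q y0 \<le> r * q x" using le y0 by auto
      thus "0 < q x" using y0 r by (smt (verit) mult_nonneg_nonneg mult_le_0_iff)
    qed
    have "q \<in> Pn n" unfolding Pn_def using nn z s1 by auto
    thus "q \<in> Pn_rho n r" using Pn_rho_iff[OF n r] pos le by auto
  qed
  thus ?thesis using cK cC by (simp add: compact_Int_closed)
qed

lemma Pn_rho_max:
  fixes F :: "(nat \<Rightarrow> real) \<Rightarrow> real"
  assumes n: "n \<ge> 1" and r: "r \<ge> 1" and c: "continuous_on (Pn_rho n r) F"
  shows "\<exists>P\<in>Pn_rho n r. \<forall>P'\<in>Pn_rho n r. F P' \<le> F P"
proof -
  have ne: "Pn_rho n r \<noteq> {}" using Unif_in[OF n r] by auto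
  show ?thesis using continuous_attains_sup[OF Pn_rho_compact[OF n r] ne c] by blast
qed

lemma cont_Df1:
  fixes f :: "real \<Rightarrow> real"
  assumes f: "convex_on {0<..} f" and n: "n \<ge> 1" and r: "r \<ge> 1" and Q: "\<forall>x\<in>{1..n}. 0 < Q x"
  shows "continuous_on (Pn_rho n r) (\<lambda>P. Df n f P Q)"
proof -
  have cf: "continuous_on {0<..} f" by (rule phi_cont[OF f])
  have pos: "\<And>P x. P \<in> Pn_rho n r \<Longrightarrow> x \<in> {1..n} \<Longrightarrow> 0 < P x" using Pn_rho_iff[OF n r] by auto
  have "continuous_on (Pn_rho n r) (\<lambda>P. f (P x / Q x))" if x: "x \<in> {1..n}" for x
  proof -
    have Qx: "Q x > 0" using Q x by auto
    show ?thesis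
      apply (rule continuous_on_compose2[OF cf])
       apply (intro continuous_intros cont_coord)
      using pos Qx x by auto
  qed
  thus ?thesis unfolding Df_def by (intro continuous_on_sum continuous_intros) auto
qed

lemma cont_Df2:
  fixes f :: "real \<Rightarrow> real"
  assumes f: "convex_on {0<..} f" and n: "n \<ge> 1" and r: "r \<ge> 1" and Q: "\<forall>x\<in>{1..n}. 0 < Q x"
  shows "continuous_on (Pn_rho n r) (\<lambda>P. Df n f Q P)"
proof -
  have cf: "continuous_on {0<..} f" by (rule phi_cont[OF f])
  have pos: "\<And>P x. P \<in> Pn_rho n r \<Longrightarrow> x \<in> {1..n} \<Longrightarrow> 0 < P x" using Pn_rho_iff[OF n r] by auto
  have "continuous_on (Pn_rho n r) (\<lambda>P. f (Q x / P x))" if x: "x \<in> {1..n}" for x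
  proof -
    have Qx: "Q x > 0" using Q x by auto
    have px: "\<And>P. P \<in> Pn_rho n r \<Longrightarrow> P x > 0" using pos x by auto
    show ?thesis
      apply (rule continuous_on_compose2[OF cf])
       apply (intro continuous_intros cont_coord)
      using px Qx by (auto simp: less_imp_neq[symmetric] dest: px)
  qed
  thus ?thesis unfolding Df_def by (intro continuous_on_sum continuous_intros cont_coord) auto
qed



lemma slope_mono:
  fixes f :: "real \<Rightarrow> real"
  assumes f: "convex_on {0<..} f" and st: "0 < s" "s \<le> t" "t < 1"
  shows "(f t - f 1) / (1 - t) \<le> (f s - f 1) / (1 - s)"
proof -
  define l where "l = (1 - t) / (1 - s)"
  have l01: "0 \<le> l" "l \<le> 1" unfolding l_def using st by auto
  have "l * (1 - s) = 1 - t" unfolding l_def using st by simp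
  hence "t = l * s + (1 - l) * 1" by (simp add: algebra_simps)
  hence "f t \<le> l * f s + (1 - l) * f 1" using cvx[OF f, of s 1 l] st l01 by simp
  hence "f t - f 1 \<le> l * (f s - f 1)" by (simp add: algebra_simps)
  hence "(f t - f 1) / (1 - t) \<le> l * (f s - f 1) / (1 - t)" using st by (simp add: divide_right_mono)
  also have "\<dots> = (f s - f 1) / (1 - s)" unfolding l_def using st by simp
  finally show ?thesis .
qed

lemma f_at_0_ex:
  fixes f :: "real \<Rightarrow> real"
  assumes f: "convex_on {0<..} f"
  shows "((\<lambda>t. ereal (f t)) \<longlongrightarrow> f_at_0 f) (at_right 0)" "f_at_0 f \<noteq> - \<infinity>"
proof -
  define rr where "rr t = (f t - f 1) / (1 - t)" for t
  have mono: "\<And>s t. 0 < s \<Longrightarrow> s \<le> t \<Longrightarrow> t < 1 \<Longrightarrow> rr t \<le> rr s" unfolding rr_def using slope_mono[OF f] by blast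
  have feq: "\<forall>\<^sub>F t in at_right 0. f t = f 1 + (1 - t) * rr t"
    using eventually_at_right_real[OF zero_less_one] by eventually_elim (auto simp: rr_def)
  have ex: "\<exists>L. ((\<lambda>t. ereal (f t)) \<longlongrightarrow> L) (at_right 0) \<and> L \<noteq> - \<infinity>"
  proof (cases "bdd_above (rr ` {0<..<1})")
    case True
    define M where "M = Sup (rr ` {0<..<1})"
    have ub: "\<And>t. t \<in> {0<..<1} \<Longrightarrow> rr t \<le> M" unfolding M_def using True by (auto intro: cSup_upper)
    have "(rr \<longlongrightarrow> M) (at_right 0)"
    proof (rule order_tendstoI)
      fix a assume "a < M"
      then obtain t0 where t0: "t0 \<in> {0<..<1}" "a < rr t0" unfolding M_def
        using less_cSup_iff[of "rr ` {0<..<1}" a] True by auto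
      have t0p: "0 < t0" using t0 by simp
      show "\<forall>\<^sub>F t in at_right 0. a < rr t"
        using eventually_at_right_real[OF t0p]
      proof (rule eventually_mono)
        fix x assume x: "x \<in> {0<..<t0}"
        hence "rr t0 \<le> rr x" using mono[of x t0] t0 by auto
        thus "a < rr x" using t0 by simp
      qed
    next
      fix a assume "M < a"
      show "\<forall>\<^sub>F t in at_right 0. rr t < a"
        using eventually_at_right_real[OF zero_less_one] by eventually_elim (use ub \<open>M < a\<close> in fastforce)
    qed
    hence "((\<lambda>t. f 1 + (1 - t) * rr t) \<longlongrightarrow> f 1 + (1 - 0) * M) (at_right 0)"
      by (intro tendsto_intros) auto
    hence "(f \<longlongrightarrow> f 1 + M) (at_right 0)"
      using feq by (simp add: tendsto_cong)
    thus ?thesis by (intro exI[of _ "ereal (f 1 + M)"]) simp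
  next
    case False
    have "((\<lambda>t. ereal (f t)) \<longlongrightarrow> \<infinity>) (at_right 0)"
      unfolding tendsto_PInfty
    proof
      fix Z
      obtain t0 where t0: "t0 \<in> {0<..<1}" "rr t0 > 2 * max 0 (Z - f 1) + 1"
      proof -
        have "\<not> (\<forall>x\<in>rr ` {0<..<1}. x \<le> 2 * max 0 (Z - f 1) + 1)" using False unfolding bdd_above_def by blast
        thus ?thesis using that by (auto simp: not_le)
      qed
      have min_t0: "0 < min t0 (1/2)" using t0 by simp
      show "\<forall>\<^sub>F t in at_right 0. ereal Z < ereal (f t)"
        using eventually_at_right_real[of 0 "min t0 (1/2)", OF min_t0] feq
      proof eventually_elim
        case (elim t)
        have "rr t \<ge> rr t0" using mono[of t t0] elim t0 by auto
        hence rt: "rr t > 2 * max 0 (Z - f 1)" using t0 by simp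
        have "(1 - t) * rr t \<ge> (1/2) * rr t" using elim rt
          by (intro mult_right_mono) (auto, smt (verit))
        moreover have "\<And>a b c::real. 1/2 * a \<le> b \<Longrightarrow> 2 * c < a \<Longrightarrow> c < b" by linarith
        ultimately have A: "(1 - t) * rr t > max 0 (Z - f 1)" using rt by blast
        have "max 0 (Z - f 1) \<ge> Z - f 1" by simp
        hence "f t > Z" using elim(2) A by linarith
        thus ?case by simp
      qed
    qed
    thus ?thesis by auto
  qed
  then obtain L where L: "((\<lambda>t. ereal (f t)) \<longlongrightarrow> L) (at_right 0)" "L \<noteq> - \<infinity>" by blast
  have "f_at_0 f = L" unfolding f_at_0_def using L(1) by (simp add: tendsto_Lim)
  thus "((\<lambda>t. ereal (f t)) \<longlongrightarrow> f_at_0 f) (at_right 0)" "f_at_0 f \<noteq> - \<infinity>" using L by auto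
qed



lemma taylor2:
  fixes f :: "real \<Rightarrow> real"
  assumes td: "twice_diff_pos f" and ab: "0 < a" "a \<le> 1" "1 \<le> b" and y: "a \<le> y" "y \<le> b"
  shows "\<exists>t. a \<le> t \<and> t \<le> b \<and> f y = f 1 + deriv f 1 * (y - 1) + deriv (deriv f) t / 2 * (y - 1)\<^sup>2"
proof (cases "y = 1")
  case True thus ?thesis using ab by (intro exI[of _ 1]) auto
next
  case False
  define D where "D m = (if m = 0 then f else if m = 1 then deriv f else deriv (deriv f))" for m :: nat
  have DER: "\<forall>m t. m < 2 \<and> a \<le> t \<and> t \<le> b \<longrightarrow> DERIV (D m) t :> D (Suc m) t"
  proof (intro allI impI)
    fix m :: nat and t :: real assume h: "m < 2 \<and> a \<le> t \<and> t \<le> b"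
    hence tp: "t > 0" using ab by simp
    have d1: "f differentiable (at t)" "deriv f differentiable (at t)" using td tp unfolding twice_diff_pos_def by auto
    show "DERIV (D m) t :> D (Suc m) t"
    proof (cases "m = 0")
      case True thus ?thesis using d1 by (simp add: D_def DERIV_deriv_iff_real_differentiable)
    next
      case False hence "m = 1" using h by simp
      thus ?thesis using d1 by (simp add: D_def DERIV_deriv_iff_real_differentiable)
    qed
  qed
  obtain t where t: "(if y < 1 then y < t \<and> t < 1 else 1 < t \<and> t < y)"
    "f y = (\<Sum>m<2. D m 1 / fact m * (y - 1) ^ m) + D 2 t / fact 2 * (y - 1) ^ 2"
    using Taylor[of 2 D f a b 1 y, OF _ _ DER] ab y False by (auto simp: D_def)
  have "a \<le> t \<and> t \<le> b" using t(1) ab y by (auto split: if_splits)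
  moreover have "f y = f 1 + deriv f 1 * (y - 1) + deriv (deriv f) t / 2 * (y - 1)\<^sup>2"
    using t(2) by (simp add: D_def numeral_2_eq_2)
  ultimately show ?thesis by blast
qed

lemma chi_identity:
  assumes n: "n \<ge> 1" and Q: "(\<Sum>x\<in>{1..n}. Q x) = 1"
  shows "(\<Sum>x\<in>{1..n}. (real n * Q x - 1)\<^sup>2) / real n = real n * sqnorm2 n Q - 1"
    "(\<Sum>x\<in>{1..n}. (real n * Q x - 1)) = 0"
proof -
  have "(\<Sum>x\<in>{1..n}. (real n * Q x - 1)\<^sup>2) = (\<Sum>x\<in>{1..n}. (real n)\<^sup>2 * (Q x)\<^sup>2 - 2 * real n * Q x + 1)"
    by (rule sum.cong) (auto simp: power2_eq_square algebra_simps)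
  also have "\<dots> = (real n)\<^sup>2 * sqnorm2 n Q - 2 * real n * 1 + real n"
    unfolding sqnorm2_def using Q by (simp add: sum.distrib sum_subtractf sum_distrib_left[symmetric])
  finally show "(\<Sum>x\<in>{1..n}. (real n * Q x - 1)\<^sup>2) / real n = real n * sqnorm2 n Q - 1"
    using n by (simp add: field_simps power2_eq_square)
  show "(\<Sum>x\<in>{1..n}. (real n * Q x - 1)) = 0" using Q by (simp add: sum_subtractf sum_distrib_left[symmetric])
qed

lemma var_bound:
  assumes n: "n \<ge> 1" and r: "r \<ge> 1" and Q: "Q \<in> Pn_rho n r"
  shows "0 \<le> real n * sqnorm2 n Q - 1" "real n * sqnorm2 n Q - 1 \<le> (r - 1)\<^sup>2 / (4 * r)"
    "\<forall>x\<in>{1..n}. 1 / r \<le> real n * Q x \<and> real n * Q x \<le> r"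
proof -
  note F = Pn_rho_facts[OF n r Q]
  define a where "a = real n * qmin n Q"
  have a0: "a > 0" "a \<le> 1" "1 \<le> r * a" using F n unfolding a_def by (auto simp: algebra_simps)
  have ya: "\<forall>x\<in>{1..n}. a \<le> real n * Q x \<and> real n * Q x \<le> r * a"
    using F n unfolding a_def by (auto simp: algebra_simps)
  note ci = chi_identity[OF n F(6)]
  show "0 \<le> real n * sqnorm2 n Q - 1" unfolding ci(1)[symmetric] using n by (auto intro!: sum_nonneg divide_nonneg_pos)
  have "1 / r \<le> a" using a0 r by (simp add: divide_le_eq mult.commute)
  moreover have "r * a \<le> r" using a0 r by (simp add: mult_left_le)
  ultimately show "\<forall>x\<in>{1..n}. 1 / r \<le> real n * Q x \<and> real n * Q x \<le> r"
  proof (intro ballI)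
    fix x assume x: "x \<in> {1..n}"
    have "a \<le> real n * Q x \<and> real n * Q x \<le> r * a" using ya x by auto
    with \<open>1 / r \<le> a\<close> \<open>r * a \<le> r\<close> show "1 / r \<le> real n * Q x \<and> real n * Q x \<le> r" by linarith
  qed
  have py: "(real n * Q x)\<^sup>2 \<le> (1 + r) * a * (real n * Q x) - r * a\<^sup>2" if "x \<in> {1..n}" for x
  proof -
    have "0 \<le> (real n * Q x - a) * (r * a - real n * Q x)" using ya that by auto
    thus ?thesis by (simp add: algebra_simps power2_eq_square)
  qed
  have "(\<Sum>x\<in>{1..n}. (real n * Q x - 1)\<^sup>2) = (\<Sum>x\<in>{1..n}. (real n * Q x)\<^sup>2 - 2 * (real n * Q x - 1) - 1)"
    by (rule sum.cong) (auto simp: power2_eq_square algebra_simps)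
  also have "\<dots> = (\<Sum>x\<in>{1..n}. (real n * Q x)\<^sup>2) - 2 * (\<Sum>x\<in>{1..n}. (real n * Q x - 1)) - real n"
    by (simp only: sum_subtractf sum_distrib_left[symmetric] sum_constant) simp
  also have "\<dots> = (\<Sum>x\<in>{1..n}. (real n * Q x)\<^sup>2) - real n"
    using ci(2) by simp
  also have "\<dots> \<le> (\<Sum>x\<in>{1..n}. (1 + r) * a * (real n * Q x) - r * a\<^sup>2) - real n"
    using py by (intro diff_right_mono sum_mono) auto
  also have "\<dots> = (1 + r) * a * (real n * (\<Sum>x\<in>{1..n}. Q x)) - real n * (r * a\<^sup>2) - real n"
    by (simp only: sum_subtractf sum_distrib_left[symmetric] sum_constant) simp
  also have "\<dots> = real n * ((1 + r) * a - r * a\<^sup>2 - 1)"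
    using F(6) by (simp add: algebra_simps)
  finally have "real n * sqnorm2 n Q - 1 \<le> (1 + r) * a - r * a\<^sup>2 - 1"
    unfolding ci(1)[symmetric] using n by (simp add: divide_le_eq mult.commute)
  also have "\<dots> \<le> (r - 1)\<^sup>2 / (4 * r)"
  proof -
    have "0 \<le> (2 * r * a - (1 + r))\<^sup>2" by simp
    hence "4 * r * ((1 + r) * a - r * a\<^sup>2 - 1) \<le> (r - 1)\<^sup>2" by (simp add: algebra_simps power2_eq_square)
    thus ?thesis using r by (simp add: le_divide_eq mult.commute)
  qed
  finally show "real n * sqnorm2 n Q - 1 \<le> (r - 1)\<^sup>2 / (4 * r)" .
qed

lemma Df_taylor:
  fixes f :: "real \<Rightarrow> real"
  assumes n: "n \<ge> 1" and r: "r \<ge> 1" and Q: "Q \<in> Pn_rho n r" and f1: "f 1 = 0" and td: "twice_diff_pos f"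
    and lo: "\<forall>t\<in>{1/r..r}. lo \<le> deriv (deriv f) t" and hi: "\<forall>t\<in>{1/r..r}. deriv (deriv f) t \<le> hi"
  shows "lo / 2 * (real n * sqnorm2 n Q - 1) \<le> Df n f Q (Unif n)"
    "Df n f Q (Unif n) \<le> hi / 2 * (real n * sqnorm2 n Q - 1)"
proof -
  note F = Pn_rho_facts[OF n r Q]
  note ci = chi_identity[OF n F(6)]
  note vb = var_bound[OF n r Q]
  have rp: "0 < 1 / r" "1 / r \<le> 1" using r by auto
  have pt: "lo / 2 * (real n * Q x - 1)\<^sup>2 \<le> f (real n * Q x) - deriv f 1 * (real n * Q x - 1)
     \<and> f (real n * Q x) - deriv f 1 * (real n * Q x - 1) \<le> hi / 2 * (real n * Q x - 1)\<^sup>2"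
    if x: "x \<in> {1..n}" for x
  proof -
    obtain t where t: "1/r \<le> t" "t \<le> r" "f (real n * Q x) = f 1 + deriv f 1 * (real n * Q x - 1) + deriv (deriv f) t / 2 * (real n * Q x - 1)\<^sup>2"
      using taylor2[OF td rp r, of "real n * Q x"] vb(3) x by auto
    have "lo / 2 * (real n * Q x - 1)\<^sup>2 \<le> deriv (deriv f) t / 2 * (real n * Q x - 1)\<^sup>2"
      using lo t by (intro mult_right_mono divide_right_mono) auto
    moreover have "deriv (deriv f) t / 2 * (real n * Q x - 1)\<^sup>2 \<le> hi / 2 * (real n * Q x - 1)\<^sup>2"
      using hi t by (intro mult_right_mono divide_right_mono) auto
    ultimately show ?thesis using t(3) f1 by simp
  qed
  have De: "Df n f Q (Unif n) = (\<Sum>x\<in>{1..n}. f (real n * Q x) - deriv f 1 * (real n * Q x - 1)) / real n"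
    unfolding Df_U1[OF n] using ci(2) by (simp add: sum_subtractf sum_distrib_left[symmetric])
  have "lo / 2 * (real n * sqnorm2 n Q - 1) = (\<Sum>x\<in>{1..n}. lo / 2 * (real n * Q x - 1)\<^sup>2) / real n"
    unfolding ci(1)[symmetric] by (simp add: sum_distrib_left)
  also have "\<dots> \<le> Df n f Q (Unif n)" unfolding De
    by (intro divide_right_mono sum_mono) (use pt in auto)
  finally show "lo / 2 * (real n * sqnorm2 n Q - 1) \<le> Df n f Q (Unif n)" .
  have "Df n f Q (Unif n) \<le> (\<Sum>x\<in>{1..n}. hi / 2 * (real n * Q x - 1)\<^sup>2) / real n" unfolding De
    by (intro divide_right_mono sum_mono) (use pt in auto)
  also have "\<dots> = hi / 2 * (real n * sqnorm2 n Q - 1)"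
    unfolding ci(1)[symmetric] by (simp add: sum_distrib_left)
  finally show "Df n f Q (Unif n) \<le> hi / 2 * (real n * sqnorm2 n Q - 1)" .
qed

lemma chi2_exact:
  assumes n: "n \<ge> 1" and r: "r \<ge> 1" and Q: "Q \<in> Pn_rho n r"
  shows "Df n (\<lambda>t. (t - 1)\<^sup>2) Q (Unif n) = 2 / 2 * (real n * sqnorm2 n Q - 1)"
  using chi_identity(1)[OF n Pn_rho_facts(6)[OF n r Q]] unfolding Df_U1[OF n] by simp

lemma rho_cond:
  assumes d: "0 < d" and M: "0 < Mf" and r: "r \<ge> 1"
    and rc: "r \<le> 1 + 4 * d / Mf + sqrt (8 * d / Mf + 16 * d\<^sup>2 / Mf\<^sup>2)"
  shows "Mf * (r - 1)\<^sup>2 / (8 * r) \<le> d"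
proof -
  define c where "c = 4 * d / Mf"
  have c0: "c > 0" unfolding c_def using d M by simp
  have e: "8 * d / Mf + 16 * d\<^sup>2 / Mf\<^sup>2 = c\<^sup>2 + 2 * c" unfolding c_def by (simp add: power2_eq_square field_simps)
  define w where "w = r - 1"
  have w0: "w \<ge> 0" unfolding w_def using r by simp
  have wc: "w \<le> c + sqrt (c\<^sup>2 + 2 * c)" using rc unfolding w_def c_def[symmetric] e by simp
  have "(w - c)\<^sup>2 \<le> c\<^sup>2 + 2 * c"
  proof (cases "w \<ge> c")
    case True
    hence "(w - c)\<^sup>2 \<le> (sqrt (c\<^sup>2 + 2 * c))\<^sup>2" using wc by (intro power_mono) auto
    thus ?thesis using c0 by simp
  next
    case False
    hence "(c - w)\<^sup>2 \<le> c\<^sup>2" using w0 by (intro power_mono) auto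
    hence "(w - c)\<^sup>2 \<le> c\<^sup>2" by (simp add: power2_commute)
    thus ?thesis using c0 by simp
  qed
  hence "w\<^sup>2 \<le> 2 * c * (1 + w)" by (simp add: power2_eq_square algebra_simps)
  hence "(r - 1)\<^sup>2 \<le> 8 * d / Mf * r" unfolding w_def c_def by simp
  hence "Mf * (r - 1)\<^sup>2 \<le> 8 * d * r" using M by (simp add: field_simps)
  thus ?thesis using r by (simp add: divide_le_eq mult.commute mult.left_commute)
qed



lemma floor_grid:
  assumes k: "k \<ge> 1" and x: "x \<in> {0..1::real}"
  defines "m \<equiv> nat \<lfloor>real k * x\<rfloor>"
  shows "m \<le> k" "real m / real k \<le> x" "x - 1 / real k \<le> real m / real k" "0 \<le> real m / real k"
proof -
  have kx: "0 \<le> real k * x" "real k * x \<le> real k" using x k by (auto simp: mult_left_le)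
  have fl: "real m \<le> real k * x" "real k * x < real m + 1" unfolding m_def using kx by linarith+
  show "m \<le> k" using fl kx by linarith
  show "real m / real k \<le> x" using fl k by (simp add: divide_le_eq mult.commute)
  have "x - 1 / real k = (real k * x - 1) / real k" using k by (simp add: field_simps)
  also have "\<dots> \<le> real m / real k" using fl k by (intro divide_right_mono) auto
  finally show "x - 1 / real k \<le> real m / real k" .
  show "0 \<le> real m / real k" by simp
qed

lemma UU_limit:
  fixes g :: "real \<Rightarrow> real"
  assumes g: "convex_on {0<..} g" and r: "r \<ge> 1"
  shows "(\<lambda>k. UU g k r) \<longlonglongrightarrow> Sup (gf g r ` {0..1})"
proof -
  obtain xs where xs: "xs \<in> {0..1}" "gf g r xs = Sup (gf g r ` {0..1})" using gf_sup(2)[OF g r] by blast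
  define m where "m k = nat \<lfloor>real k * xs\<rfloor>" for k :: nat
  define y where "y k = real (m k) / real k" for k :: nat
  have ev1: "\<forall>\<^sub>F k in sequentially. xs - 1 / real k \<le> y k"
    using eventually_ge_at_top[of 1] by eventually_elim (use floor_grid xs in \<open>auto simp: y_def m_def\<close>)
  have ev2: "\<forall>\<^sub>F k in sequentially. y k \<le> xs"
    using eventually_ge_at_top[of 1] by eventually_elim (use floor_grid xs in \<open>auto simp: y_def m_def\<close>)
  have "(\<lambda>k. xs - 1 / real k) \<longlonglongrightarrow> xs - 0" by (intro tendsto_intros)
  hence yl: "y \<longlonglongrightarrow> xs" using tendsto_sandwich[OF ev1 ev2] by simp
  have ev3: "\<forall>\<^sub>F k in sequentially. y k \<in> {0..1}"
    using ev2
  proof eventually_elim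
    case (elim k)
    have "0 \<le> y k" unfolding y_def by simp
    thus ?case using elim xs by auto
  qed
  have gl: "(\<lambda>k. gf g r (y k)) \<longlonglongrightarrow> gf g r xs"
    by (rule continuous_on_tendsto_compose[OF gf_cont[OF g r] yl xs(1) ev3])
  have lo: "\<forall>\<^sub>F k in sequentially. gf g r (y k) \<le> UU g k r"
    using eventually_ge_at_top[of 1]
  proof eventually_elim
    case (elim k)
    have "m k \<le> k" unfolding m_def using floor_grid(1)[OF elim xs(1)] .
    thus ?case unfolding y_def using UU_props(3)[OF g elim r] by blast
  qed
  have hi: "\<forall>\<^sub>F k in sequentially. UU g k r \<le> Sup (gf g r ` {0..1})"
    using eventually_ge_at_top[of 1] by eventually_elim (use UU_props(4)[OF g _ r] in blast)
  show ?thesis using tendsto_sandwich[OF lo hi] gl xs(2) by simp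
qed

lemma uf_limit:
  fixes f :: "real \<Rightarrow> real"
  assumes f: "convex_on {0<..} f" and r: "r \<ge> 1"
  shows "(\<lambda>k. uf f k r) \<longlonglongrightarrow> Sup (gf f r ` {0..1})"
proof -
  have "\<forall>\<^sub>F k in sequentially. UU f k r = uf f k r"
    using eventually_ge_at_top[of 1] by eventually_elim (simp add: uf_UU)
  thus ?thesis using UU_limit[OF f r] by (rule Lim_transform_eventually[rotated])
qed

lemma vf_limit:
  fixes f :: "real \<Rightarrow> real"
  assumes f: "convex_on {0<..} f" and r: "r \<ge> 1"
  shows "(\<lambda>k. vf f k r) \<longlonglongrightarrow> Sup ((\<lambda>x. r * x / (1 + (r - 1) * x) * f ((1 + (r - 1) * x) / r)
                 + (1 - x) * f (1 + (r - 1) * x) / (1 + (r - 1) * x)) ` {0..1})"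
proof -
  have "\<forall>\<^sub>F k in sequentially. UU (fstar f) k r = vf f k r"
    using eventually_ge_at_top[of 1] by eventually_elim (simp add: vf_UU)
  hence L: "(\<lambda>k. vf f k r) \<longlonglongrightarrow> Sup (gf (fstar f) r ` {0..1})"
    using UU_limit[OF fstar_convex[OF f] r] by (rule Lim_transform_eventually[rotated])
  have "gf (fstar f) r ` {0..1} = (\<lambda>x. r * x / (1 + (r - 1) * x) * f ((1 + (r - 1) * x) / r)
                 + (1 - x) * f (1 + (r - 1) * x) / (1 + (r - 1) * x)) ` {0..1}"
  proof (rule image_cong[OF refl])
    fix x :: real assume x: "x \<in> {0..1}"
    have D: "1 + (r - 1) * x > 0" using x r by (smt (verit) atLeastAtMost_iff mult_nonneg_nonneg)
    show "gf (fstar f) r x = r * x / (1 + (r - 1) * x) * f ((1 + (r - 1) * x) / r)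
                 + (1 - x) * f (1 + (r - 1) * x) / (1 + (r - 1) * x)"
      unfolding gf_def fstar_def using D r by simp
  qed
  thus ?thesis using L by simp
qed

lemma part_f:
  fixes f :: "real \<Rightarrow> real"
  assumes f: "convex_on {0<..} f" and r: "r \<ge> 1" and n: "n \<ge> 1"
    and dif: "\<forall>x\<in>{0<..<1}. gf f r differentiable (at x)"
    and dK: "\<forall>x\<in>{0<..<1}. deriv (gf f r) x \<le> K" and K: "0 \<le> K"
  shows "0 \<le> lim (\<lambda>k. uf f k r) - uf f n r \<and> lim (\<lambda>k. uf f k r) - uf f n r \<le> K / real n"
proof -
  have lim: "lim (\<lambda>k. uf f k r) = Sup (gf f r ` {0..1})" using uf_limit[OF f r] by (rule limI)
  have u: "uf f n r = UU f n r" using uf_UU[OF n] .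
  obtain xs where xs: "xs \<in> {0..1}" "gf f r xs = Sup (gf f r ` {0..1})" using gf_sup(2)[OF f r] by blast
  define m where "m = nat \<lfloor>real n * xs\<rfloor>"
  define y where "y = real m / real n"
  note fg = floor_grid[OF n xs(1), folded m_def, folded y_def]
  have "gf f r y \<le> UU f n r" unfolding y_def using UU_props(3)[OF f n r fg(1)] .
  moreover have "gf f r xs - gf f r y \<le> K / real n"
  proof (cases "y = xs")
    case True thus ?thesis using K n by simp
  next
    case False
    hence lt: "y < xs" using fg by simp
    have cont: "continuous_on {y..xs} (gf f r)"
      by (rule continuous_on_subset[OF gf_cont[OF f r]]) (use fg xs in auto)
    have "\<And>z. y < z \<Longrightarrow> z < xs \<Longrightarrow> gf f r differentiable (at z)" using dif fg xs by auto
    then obtain l z where lz: "y < z" "z < xs" "DERIV (gf f r) z :> l" "gf f r xs - gf f r y = (xs - y) * l"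
      using MVT[OF lt cont] by blast
    have "l = deriv (gf f r) z" using lz(3) by (simp add: DERIV_imp_deriv)
    hence "l \<le> K" using dK lz fg xs by auto
    hence "(xs - y) * l \<le> (xs - y) * K" using lt by (simp add: mult_left_mono)
    also have "\<dots> \<le> (1 / real n) * K" using fg K by (intro mult_right_mono) auto
    finally show ?thesis using lz(4) by simp
  qed
  moreover have "UU f n r \<le> Sup (gf f r ` {0..1})" by (rule UU_props(4)[OF f n r])
  ultimately show ?thesis unfolding lim u using xs(2) by linarith
qed



lemma f_lim0_real:
  fixes f :: "real \<Rightarrow> real"
  assumes f: "convex_on {0<..} f" and c0: "f_at_0 f = ereal c0"
  shows "(f \<longlongrightarrow> c0) (at_right 0)"
  using f_at_0_ex(1)[OF f] unfolding c0 by simp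

lemma KL:
  fixes f :: "real \<Rightarrow> real"
  assumes f: "convex_on {0<..} f" and c0: "f_at_0 f = ereal c0" and l: "0 < l" "l \<le> 1" and N: "N > 0"
  shows "f (l * N) \<le> l * f N + (1 - l) * c0"
proof -
  have L1: "((\<lambda>s. f (l * N + (1 - l) * s)) \<longlongrightarrow> f (l * N + (1 - l) * 0)) (at_right 0)"
  proof (rule continuous_on_tendsto_compose[OF phi_cont[OF f]])
    show "((\<lambda>s. l * N + (1 - l) * s) \<longlongrightarrow> l * N + (1 - l) * 0) (at_right 0)"
      by (intro tendsto_intros)
    show "l * N + (1 - l) * 0 \<in> {0<..}" using l N by simp
    show "\<forall>\<^sub>F s in at_right 0. l * N + (1 - l) * s \<in> {0<..}"
      using eventually_at_right_real[OF zero_less_one] by eventually_elim (use l N in \<open>auto intro!: add_pos_nonneg\<close>)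
  qed
  have L2: "((\<lambda>s. l * f N + (1 - l) * f s) \<longlongrightarrow> l * f N + (1 - l) * c0) (at_right 0)"
    by (intro tendsto_intros f_lim0_real[OF f c0])
  have ev: "\<forall>\<^sub>F s in at_right 0. f (l * N + (1 - l) * s) \<le> l * f N + (1 - l) * f s"
    using eventually_at_right_real[OF zero_less_one] by eventually_elim (use cvx[OF f] l N in auto)
  have "f (l * N + (1 - l) * 0) \<le> l * f N + (1 - l) * c0"
    by (rule tendsto_le[OF trivial_limit_at_right_real L2 L1 ev])
  thus ?thesis by simp
qed

lemma UU_upper0:
  fixes f :: "real \<Rightarrow> real"
  assumes f: "convex_on {0<..} f" and c0: "f_at_0 f = ereal c0" and n: "n \<ge> 1" and r: "r \<ge> 1"
  shows "UU f n r \<le> (1 - 1 / real n) * c0 + f (real n) / real n"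
  unfolding UU_def
proof (rule cSup_least)
  show "Phi f n ` Pn_rho n r \<noteq> {}" using Unif_in[OF n r] by auto
  fix v assume "v \<in> Phi f n ` Pn_rho n r"
  then obtain Q where Q: "Q \<in> Pn_rho n r" and v: "v = Phi f n Q" by auto
  note F = Pn_rho_facts[OF n r Q]
  have Q1: "Q x \<le> 1" if "x \<in> {1..n}" for x
    using member_le_sum[of x "{1..n}" Q] that F(7) F(6) by (simp add: less_imp_le)
  have "(\<Sum>x\<in>{1..n}. f (real n * Q x)) \<le> (\<Sum>x\<in>{1..n}. Q x * f (real n) + (1 - Q x) * c0)"
  proof (rule sum_mono)
    fix x assume x: "x \<in> {1..n}"
    have "f (Q x * real n) \<le> Q x * f (real n) + (1 - Q x) * c0"
      by (rule KL[OF f c0]) (use F(7) x Q1 n in auto)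
    thus "f (real n * Q x) \<le> Q x * f (real n) + (1 - Q x) * c0" by (simp add: mult.commute)
  qed
  also have "\<dots> = f (real n) + (real n - 1) * c0"
    using F(6) by (simp add: sum.distrib sum_distrib_right[symmetric] sum_subtractf)
  finally have "(\<Sum>x\<in>{1..n}. f (real n * Q x)) \<le> f (real n) + (real n - 1) * c0" .
  hence "Phi f n Q \<le> (f (real n) + (real n - 1) * c0) / real n" unfolding Phi_def
    using n by (simp add: divide_right_mono)
  also have "\<dots> = (1 - 1 / real n) * c0 + f (real n) / real n" using n by (simp add: field_simps)
  finally show "v \<le> (1 - 1 / real n) * c0 + f (real n) / real n" using v by simp
qed

lemma part_g1:
  fixes f :: "real \<Rightarrow> real"
  assumes f: "convex_on {0<..} f" and n: "n \<ge> 2"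
  shows "((\<lambda>r. ereal (uf f n r)) \<longlongrightarrow> ereal (1 - 1 / real n) * f_at_0 f + ereal (f (real n) / real n)) at_top"
proof -
  have n1: "n \<ge> 1" using n by simp
  have np: "real n > 0" using n by simp
  define T where "T = ereal (1 - 1 / real n) * f_at_0 f + ereal (f (real n) / real n)"
  have cpos: "1 - 1 / real n > 0" using n by (simp add: field_simps)
  have up: "ereal (UU f n r) \<le> T" if r: "r \<ge> 1" for r
  proof (cases "f_at_0 f")
    case (real c0)
    have "UU f n r \<le> (1 - 1 / real n) * c0 + f (real n) / real n" by (rule UU_upper0[OF f real n1 r])
    thus ?thesis unfolding T_def real by simp
  next
    case PInf
    hence "T = \<infinity>" unfolding T_def using cpos n by simp
    thus ?thesis by simp
  next
    case MInf thus ?thesis using f_at_0_ex(2)[OF f] by simp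
  qed
  define e where "e r = (real n - 1) / r" for r :: real
  have el: "(e \<longlongrightarrow> 0) at_top" unfolding e_def
    by (intro tendsto_divide_0[OF tendsto_const] filterlim_at_top_imp_at_infinity filterlim_ident)
  define A where "A r = r / (1 + (r - 1) * (1 / real n))" for r
  define B where "B r = 1 / (1 + (r - 1) * (1 / real n))" for r
  have Ae: "\<forall>\<^sub>F r in at_top. real n / (1 + e r) = A r"
    using eventually_ge_at_top[of "1::real"] by eventually_elim (use np in \<open>auto simp: e_def A_def field_simps\<close>)
  have Be: "\<forall>\<^sub>F r in at_top. (real n * (1 / r)) / (1 + e r) = B r"
    using eventually_ge_at_top[of "1::real"] by eventually_elim (use np in \<open>auto simp: e_def B_def field_simps\<close>)
  have "((\<lambda>r. real n / (1 + e r)) \<longlongrightarrow> real n / (1 + 0)) at_top" by (intro tendsto_intros el) simp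
  hence Al: "(A \<longlongrightarrow> real n) at_top" using Ae by (simp add: tendsto_cong)
  have "((\<lambda>r. (real n * (1 / r)) / (1 + e r)) \<longlongrightarrow> (real n * 0) / (1 + 0)) at_top"
    by (intro tendsto_intros el tendsto_divide_0[OF tendsto_const] filterlim_at_top_imp_at_infinity filterlim_ident) simp
  hence Bl: "(B \<longlongrightarrow> 0) at_top" using Be by (simp add: tendsto_cong)
  have Bpos: "\<forall>\<^sub>F r in at_top. B r > 0"
    using eventually_ge_at_top[of "1::real"] by eventually_elim (use np in \<open>auto simp: B_def intro!: add_pos_nonneg\<close>)
  have Br: "filterlim B (at_right 0) at_top" by (rule tendsto_imp_filterlim_at_right[OF Bl Bpos])
  have fB: "((\<lambda>r. ereal (f (B r))) \<longlongrightarrow> f_at_0 f) at_top"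
    using filterlim_compose[OF f_at_0_ex(1)[OF f] Br] by simp
  have Apos: "\<forall>\<^sub>F r in at_top. A r \<in> {0<..}"
    using eventually_ge_at_top[of "1::real"] by eventually_elim (use np in \<open>auto simp: A_def intro!: divide_pos_pos add_pos_nonneg\<close>)
  have fA: "((\<lambda>r. f (A r)) \<longlongrightarrow> f (real n)) at_top"
    by (rule continuous_on_tendsto_compose[OF phi_cont[OF f] Al]) (use np Apos in auto)
  have lim1: "((\<lambda>r. ereal (1 / real n * f (A r)) + ereal (1 - 1 / real n) * ereal (f (B r)))
      \<longlongrightarrow> ereal (1 / real n * f (real n)) + ereal (1 - 1 / real n) * f_at_0 f) at_top"
  proof (rule tendsto_add_ereal_general2)
    show "\<bar>ereal (1 / real n * f (real n))\<bar> \<noteq> \<infinity>" by simp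
    show "((\<lambda>r. ereal (1 / real n * f (A r))) \<longlongrightarrow> ereal (1 / real n * f (real n))) at_top"
      unfolding lim_ereal by (intro tendsto_intros fA)
    show "((\<lambda>r. ereal (1 - 1 / real n) * ereal (f (B r))) \<longlongrightarrow> ereal (1 - 1 / real n) * f_at_0 f) at_top"
      by (rule tendsto_cmult_ereal[OF _ fB]) simp
  qed
  have Teq: "ereal (1 / real n * f (real n)) + ereal (1 - 1 / real n) * f_at_0 f = T"
    unfolding T_def by (simp add: add.commute)
  have gfe: "ereal (gf f r (1 / real n)) = ereal (1 / real n * f (A r)) + ereal (1 - 1 / real n) * ereal (f (B r))" for r
    unfolding gf_def A_def B_def by simp
  have lo: "\<forall>\<^sub>F r in at_top. ereal (1 / real n * f (A r)) + ereal (1 - 1 / real n) * ereal (f (B r)) \<le> ereal (uf f n r)"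
    using eventually_ge_at_top[of "1::real"]
  proof eventually_elim
    case (elim r)
    have "gf f r (real 1 / real n) \<le> UU f n r" by (rule UU_props(3)[OF f n1 elim]) (use n in simp)
    thus ?case unfolding gfe[symmetric] uf_UU[OF n1] by simp
  qed
  have hi: "\<forall>\<^sub>F r in at_top. ereal (uf f n r) \<le> T"
    using eventually_ge_at_top[of "1::real"] by eventually_elim (use up uf_UU[OF n1] in auto)
  have "((\<lambda>r. ereal (uf f n r)) \<longlongrightarrow> T) at_top"
    by (rule tendsto_sandwich[OF lo hi]) (use lim1 Teq in auto)
  thus ?thesis unfolding T_def .
qed



lemma lip:
  fixes f :: "real \<Rightarrow> real"
  assumes f: "convex_on {0<..} f" and N: "N > 0" and dif: "\<forall>t\<in>{0<..<N}. f differentiable (at t)"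
    and Kb: "\<forall>z\<in>{0<..<N}. \<bar>deriv f z\<bar> \<le> K" and ab: "0 < a" "a \<le> b" "b \<le> N"
  shows "\<bar>f b - f a\<bar> \<le> K * (b - a)"
proof (cases "a = b")
  case True thus ?thesis by simp
next
  case False
  hence lt: "a < b" using ab by simp
  have cont: "continuous_on {a..b} f" by (rule continuous_on_subset[OF phi_cont[OF f]]) (use ab in auto)
  have "\<And>z. a < z \<Longrightarrow> z < b \<Longrightarrow> f differentiable (at z)" using dif ab by auto
  then obtain l z where lz: "a < z" "z < b" "DERIV f z :> l" "f b - f a = (b - a) * l"
    using MVT[OF lt cont] by blast
  have "l = deriv f z" using lz(3) by (simp add: DERIV_imp_deriv)
  hence "\<bar>l\<bar> \<le> K" using Kb lz ab by auto
  hence "\<bar>f b - f a\<bar> \<le> (b - a) * K" unfolding lz(4) using lt by (simp add: abs_mult mult_left_mono)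
  thus ?thesis by (simp add: mult.commute)
qed

lemma part_g2:
  fixes f :: "real \<Rightarrow> real"
  assumes f: "convex_on {0<..} f" and n: "n \<ge> 2" and r: "\<rho> \<ge> 1"
    and h: "f_at_0 f < \<infinity> \<and> (\<forall>t\<in>{0<..<real n}. f differentiable (at t))
        \<and> bdd_above ((\<lambda>t. \<bar>deriv f t\<bar>) ` {0<..<real n})"
  shows "0 \<le> Lim at_top (\<lambda>r. uf f n r) - uf f n \<rho>
      \<and> Lim at_top (\<lambda>r. uf f n r) - uf f n \<rho>
          \<le> 2 * Sup ((\<lambda>t. \<bar>deriv f t\<bar>) ` {0<..<real n}) * (real n - 1) / (real n + \<rho> - 1)"
proof -
  have n1: "n \<ge> 1" using n by simp
  have np: "real n > 0" using n by simp
  define K where "K = Sup ((\<lambda>t. \<bar>deriv f t\<bar>) ` {0<..<real n})"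
  have Kb: "\<forall>z\<in>{0<..<real n}. \<bar>deriv f z\<bar> \<le> K" unfolding K_def using h by (auto intro: cSup_upper)
  obtain c0 where c0: "f_at_0 f = ereal c0" using h f_at_0_ex(2)[OF f] by (cases "f_at_0 f") auto
  define T0 where "T0 = (1 - 1 / real n) * c0 + f (real n) / real n"
  have "((\<lambda>r. ereal (uf f n r)) \<longlongrightarrow> ereal T0) at_top"
    using part_g1[OF f n] unfolding c0 T0_def by simp
  hence "((\<lambda>r. uf f n r) \<longlongrightarrow> T0) at_top" by simp
  hence Lim: "Lim at_top (\<lambda>r. uf f n r) = T0" by (simp add: tendsto_Lim)
  have u: "uf f n \<rho> = UU f n \<rho>" by (rule uf_UU[OF n1])
  have up: "UU f n \<rho> \<le> T0" unfolding T0_def by (rule UU_upper0[OF f c0 n1 r])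
  define A where "A = \<rho> / (1 + (\<rho> - 1) * (1 / real n))"
  define B where "B = 1 / (1 + (\<rho> - 1) * (1 / real n))"
  define D where "D = real n + \<rho> - 1"
  have Dp: "D > 0" unfolding D_def using np r by simp
  have A': "A = real n * \<rho> / D" unfolding A_def D_def using np r by (simp add: field_simps)
  have B': "B = real n / D" unfolding B_def D_def using np r by (simp add: field_simps)
  have gl: "gf f \<rho> (1 / real n) \<le> UU f n \<rho>" using UU_props(3)[OF f n1 r, of 1] n by simp
  have gfe: "gf f \<rho> (1 / real n) = 1 / real n * f A + (1 - 1 / real n) * f B" unfolding gf_def A_def B_def by simp
  have Apos: "0 < A" unfolding A' using np r Dp by simp
  have An: "A \<le> real n" unfolding A' using np r Dp using n1 by (simp add: divide_le_eq D_def)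
  have dif: "\<forall>t\<in>{0<..<real n}. f differentiable (at t)" using h by blast
  have fA: "f (real n) - f A \<le> K * (real n - A)"
    using lip[OF f np dif Kb Apos An order.refl] by simp
  have Bpos: "0 < B" unfolding B' using np Dp by simp
  have B1: "B \<le> 1" unfolding B' using np Dp r D_def by (simp add: divide_le_eq)
  have fB: "c0 - f B \<le> K * B"
  proof -
    have L1: "((\<lambda>s. f s - f B) \<longlongrightarrow> c0 - f B) (at_right 0)"
      by (intro tendsto_intros f_lim0_real[OF f c0])
    have L2: "((\<lambda>s. K * (B - s)) \<longlongrightarrow> K * (B - 0)) (at_right 0)" by (intro tendsto_intros)
    have ev: "\<forall>\<^sub>F s in at_right 0. f s - f B \<le> K * (B - s)"
      using eventually_at_right_real[OF Bpos]
    proof eventually_elim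
      case (elim s)
      have "\<bar>f B - f s\<bar> \<le> K * (B - s)" by (rule lip[OF f np dif Kb]) (use elim B1 n in auto)
      thus ?case by simp
    qed
    show ?thesis using tendsto_le[OF trivial_limit_at_right_real L2 L1 ev] by simp
  qed
  have e1: "(1 - 1 / real n) * B = (real n - 1) / D" unfolding B' using np Dp by (simp add: field_simps)
  have "real n - A = real n * (D - \<rho>) / D" unfolding A' using Dp by (simp add: field_simps)
  also have "D - \<rho> = real n - 1" unfolding D_def by simp
  finally have e2': "real n - A = real n * (real n - 1) / D" .
  have e2: "1 / real n * (real n - A) = (real n - 1) / D" unfolding e2' using np by simp
  have "T0 - gf f \<rho> (1 / real n) = (1 - 1 / real n) * (c0 - f B) + 1 / real n * (f (real n) - f A)"
    unfolding T0_def gfe by (simp add: algebra_simps add_divide_distrib[symmetric])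
  also have "\<dots> \<le> (1 - 1 / real n) * (K * B) + 1 / real n * (K * (real n - A))"
    using fA fB n1 by (intro add_mono mult_left_mono) (auto simp: field_simps)
  also have "\<dots> = K * ((1 - 1 / real n) * B) + K * (1 / real n * (real n - A))" by (metis mult.left_commute)
  also have "\<dots> = 2 * K * (real n - 1) / D" unfolding e1 e2 by (simp add: field_simps)
  finally have "T0 - gf f \<rho> (1 / real n) \<le> 2 * K * (real n - 1) / D" .
  thus ?thesis unfolding Lim u K_def[symmetric] D_def[symmetric] using up gl by linarith
qed



lemma Df_taylor_hi:
  fixes f :: "real \<Rightarrow> real"
  assumes n: "n \<ge> 1" and r: "r \<ge> 1" and Q: "Q \<in> Pn_rho n r" and f1: "f 1 = 0" and td: "twice_diff_pos f"
    and hi: "\<forall>t\<in>{1/r..r}. deriv (deriv f) t \<le> hi"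
  shows "Df n f Q (Unif n) \<le> hi / 2 * (real n * sqnorm2 n Q - 1)"
proof -
  note F = Pn_rho_facts[OF n r Q]
  note ci = chi_identity[OF n F(6)]
  note vb = var_bound[OF n r Q]
  have rp: "0 < 1 / r" "1 / r \<le> 1" using r by auto
  have pt: "f (real n * Q x) - deriv f 1 * (real n * Q x - 1) \<le> hi / 2 * (real n * Q x - 1)\<^sup>2"
    if x: "x \<in> {1..n}" for x
  proof -
    obtain t where t: "1/r \<le> t" "t \<le> r" "f (real n * Q x) = f 1 + deriv f 1 * (real n * Q x - 1) + deriv (deriv f) t / 2 * (real n * Q x - 1)\<^sup>2"
      using taylor2[OF td rp r, of "real n * Q x"] vb(3) x by auto
    have "deriv (deriv f) t / 2 * (real n * Q x - 1)\<^sup>2 \<le> hi / 2 * (real n * Q x - 1)\<^sup>2"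
      using hi t by (intro mult_right_mono divide_right_mono) auto
    thus ?thesis using t(3) f1 by simp
  qed
  have De: "Df n f Q (Unif n) = (\<Sum>x\<in>{1..n}. f (real n * Q x) - deriv f 1 * (real n * Q x - 1)) / real n"
    unfolding Df_U1[OF n] using ci(2) by (simp add: sum_subtractf sum_distrib_left[symmetric])
  have "Df n f Q (Unif n) \<le> (\<Sum>x\<in>{1..n}. hi / 2 * (real n * Q x - 1)\<^sup>2) / real n" unfolding De
    by (intro divide_right_mono sum_mono) (use pt in auto)
  also have "\<dots> = hi / 2 * (real n * sqnorm2 n Q - 1)"
    unfolding ci(1)[symmetric] by (simp add: sum_distrib_left)
  finally show ?thesis .
qed

lemma Df_Phi1: "n \<ge> 1 \<Longrightarrow> Df n f Q (Unif n) = Phi f n Q"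
  using Df_U1 unfolding Phi_def by auto

lemma Df_Phi2: "n \<ge> 1 \<Longrightarrow> Df n f (Unif n) Q = Phi (fstar f) n Q"
  using Df_U2 unfolding Phi_def by auto

lemma Unif_pos: "n \<ge> 1 \<Longrightarrow> \<forall>x\<in>{1..n}. 0 < Unif n x"
  by (auto simp: Unif_def)

lemma attained:
  fixes g :: "real \<Rightarrow> real"
  assumes g: "convex_on {0<..} g" and n: "n \<ge> 2" and r: "r > 1"
    and mx: "\<exists>P\<in>Pn_rho n r. \<forall>P'\<in>Pn_rho n r. Phi g n P' \<le> Phi g n P"
  shows "\<exists>\<beta>\<in>Gamma n r. Phi g n (Qbeta n r \<beta>) = UU g n r"
proof -
  have n1: "n \<ge> 1" using n by simp
  have r1: "r \<ge> 1" using r by simp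
  obtain P where P: "P \<in> Pn_rho n r" "\<forall>P'\<in>Pn_rho n r. Phi g n P' \<le> Phi g n P" using mx by blast
  have U: "UU g n r = Phi g n P" unfolding UU_def by (rule cSup_eq_maximum) (use P in auto)
  have bG: "qmin n P \<in> Gamma n r" and le: "Phi g n P \<le> Phi g n (Qbeta n r (qmin n P))"
    using Phi_extremal[OF g n r P(1)] by auto
  have "Qbeta n r (qmin n P) \<in> Pn_rho n r" using Qbeta_facts(10)[OF n r bG] .
  hence "Phi g n (Qbeta n r (qmin n P)) \<le> Phi g n P" using P(2) by blast
  thus ?thesis using le bG U by (intro bexI[of _ "qmin n P"]) auto
qed

theorem theorem7:
  fixes f :: "real \<Rightarrow> real" and n :: nat and \<rho> :: real
  assumes fconv: "convex_on {0<..} f" and f1: "f 1 = 0"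
    and n2: "n \<ge> 2" and rho1: "\<rho> \<ge> 1"
  shows
  \<comment> \<open>(a)\<close>
  "(Pn_rho n \<rho> \<noteq> {} \<and> convex_fset (Pn_rho n \<rho>) \<and> compact (Pn_rho n \<rho>))
  \<comment> \<open>(b)\<close>
   \<and> (\<forall>Q\<in>Pn n. (\<forall>x\<in>{1..n}. 0 < Q x) \<longrightarrow>
        (\<exists>P\<in>Pn_rho n \<rho>. \<forall>P'\<in>Pn_rho n \<rho>. Df n f P' Q \<le> Df n f P Q)
      \<and> (\<exists>P\<in>Pn_rho n \<rho>. \<forall>P'\<in>Pn_rho n \<rho>. Df n f Q P' \<le> Df n f Q P))
  \<comment> \<open>(c)\<close>
   \<and> (\<rho> > 1 \<longrightarrow>
        (\<forall>\<beta>\<in>Gamma n \<rho>. Qbeta n \<rho> \<beta> \<in> Pn_rho n \<rho>)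
      \<and> (\<exists>\<beta>\<in>Gamma n \<rho>. Df n f (Qbeta n \<rho> \<beta>) (Unif n) = uf f n \<rho>)
      \<and> (\<forall>\<beta>\<in>Gamma n \<rho>. Df n f (Qbeta n \<rho> \<beta>) (Unif n) \<le> uf f n \<rho>)
      \<and> (\<exists>\<beta>\<in>Gamma n \<rho>. Df n f (Unif n) (Qbeta n \<rho> \<beta>) = vf f n \<rho>)
      \<and> (\<forall>\<beta>\<in>Gamma n \<rho>. Df n f (Unif n) (Qbeta n \<rho> \<beta>) \<le> vf f n \<rho>))
  \<comment> \<open>(d)\<close>
   \<and> (Max ((\<lambda>m. gf f \<rho> (real m / real n)) ` {0..n}) \<le> uf f n \<rho>
      \<and> uf f n \<rho> \<le> Sup (gf f \<rho> ` {0..1})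
      \<and> Max ((\<lambda>m. gf (fstar f) \<rho> (real m / real n)) ` {0..n}) \<le> vf f n \<rho>
      \<and> vf f n \<rho> \<le> Sup (gf (fstar f) \<rho> ` {0..1}))
  \<comment> \<open>(e)\<close>
   \<and> ((\<lambda>k. uf f k \<rho>) \<longlonglongrightarrow> Sup (gf f \<rho> ` {0..1}))
   \<and> ((\<lambda>k. vf f k \<rho>) \<longlonglongrightarrow>
        Sup ((\<lambda>x. \<rho> * x / (1 + (\<rho> - 1) * x) * f ((1 + (\<rho> - 1) * x) / \<rho>)
                 + (1 - x) * f (1 + (\<rho> - 1) * x) / (1 + (\<rho> - 1) * x)) ` {0..1}))
  \<comment> \<open>(f)\<close>
   \<and> (\<forall>K::real. (\<forall>x\<in>{0<..<1}. gf f \<rho> differentiable (at x))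
         \<and> (\<forall>x\<in>{0<..<1}. deriv (gf f \<rho>) x \<le> K) \<and> 0 \<le> K \<longrightarrow>
        0 \<le> lim (\<lambda>k. uf f k \<rho>) - uf f n \<rho>
      \<and> lim (\<lambda>k. uf f k \<rho>) - uf f n \<rho> \<le> K / real n)
  \<comment> \<open>(g)\<close>
   \<and> (((\<lambda>r. ereal (uf f n r)) \<longlongrightarrow>
         ereal (1 - 1 / real n) * f_at_0 f + ereal (f (real n) / real n)) at_top)
   \<and> (f_at_0 f < \<infinity> \<and> (\<forall>t\<in>{0<..<real n}. f differentiable (at t))
        \<and> bdd_above ((\<lambda>t. \<bar>deriv f t\<bar>) ` {0<..<real n}) \<longrightarrow>
        0 \<le> Lim at_top (\<lambda>r. uf f n r) - uf f n \<rho>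
      \<and> Lim at_top (\<lambda>r. uf f n r) - uf f n \<rho>
          \<le> 2 * Sup ((\<lambda>t. \<bar>deriv f t\<bar>) ` {0<..<real n}) * (real n - 1) / (real n + \<rho> - 1))
  \<comment> \<open>(h)\<close>
   \<and> (\<forall>m M :: real. twice_diff_pos f \<and> 0 \<le> m
         \<and> (\<forall>t\<in>{1/\<rho>..\<rho>}. m \<le> deriv (deriv f) t \<and> deriv (deriv f) t \<le> M) \<longrightarrow>
        (\<forall>Q\<in>Pn_rho n \<rho>.
           0 \<le> m / 2 * (real n * sqnorm2 n Q - 1)
         \<and> m / 2 * (real n * sqnorm2 n Q - 1) \<le> Df n f Q (Unif n)
         \<and> Df n f Q (Unif n) \<le> M / 2 * (real n * sqnorm2 n Q - 1)
         \<and> M / 2 * (real n * sqnorm2 n Q - 1) \<le> M * (\<rho> - 1)\<^sup>2 / (8 * \<rho>)))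
   \<and> (\<forall>Q\<in>Pn_rho n \<rho>. Df n (\<lambda>t. (t - 1)\<^sup>2) Q (Unif n) = 2 / 2 * (real n * sqnorm2 n Q - 1))
  \<comment> \<open>(i)\<close>
   \<and> (\<forall>d Mf :: real. 0 < d \<and> 0 < Mf \<and> twice_diff_pos f \<and> (\<forall>t>0. deriv (deriv f) t \<le> Mf)
        \<and> \<rho> \<le> 1 + 4 * d / Mf + sqrt (8 * d / Mf + 16 * d\<^sup>2 / Mf\<^sup>2) \<longrightarrow>
        (\<forall>Q\<in>Pn_rho n \<rho>. Df n f Q (Unif n) \<le> d))"
proof -
  have n1: "n \<ge> 1" using n2 by simp
  have fs: "convex_on {0<..} (fstar f)" by (rule fstar_convex[OF fconv])
  have UP: "Unif n \<in> Pn n" and Upos: "\<forall>x\<in>{1..n}. 0 < Unif n x"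
    using Unif_in[OF n1 rho1] Unif_pos[OF n1] unfolding Pn_rho_def by auto
  have uU: "uf f n \<rho> = UU f n \<rho>" by (rule uf_UU[OF n1])
  have vU: "vf f n \<rho> = UU (fstar f) n \<rho>" by (rule vf_UU[OF n1])
  have A: "Pn_rho n \<rho> \<noteq> {} \<and> convex_fset (Pn_rho n \<rho>) \<and> compact (Pn_rho n \<rho>)"
    using Unif_in[OF n1 rho1] Pn_rho_convex[OF n1 rho1] Pn_rho_compact[OF n1 rho1] by auto
  have B: "\<forall>Q\<in>Pn n. (\<forall>x\<in>{1..n}. 0 < Q x) \<longrightarrow>
        (\<exists>P\<in>Pn_rho n \<rho>. \<forall>P'\<in>Pn_rho n \<rho>. Df n f P' Q \<le> Df n f P Q)
      \<and> (\<exists>P\<in>Pn_rho n \<rho>. \<forall>P'\<in>Pn_rho n \<rho>. Df n f Q P' \<le> Df n f Q P)"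
  proof (intro ballI impI conjI)
    fix Q assume "Q \<in> Pn n" and pos: "\<forall>x\<in>{1..n}. 0 < Q x"
    show "\<exists>P\<in>Pn_rho n \<rho>. \<forall>P'\<in>Pn_rho n \<rho>. Df n f P' Q \<le> Df n f P Q"
      by (rule Pn_rho_max[OF n1 rho1 cont_Df1[OF fconv n1 rho1 pos]])
    show "\<exists>P\<in>Pn_rho n \<rho>. \<forall>P'\<in>Pn_rho n \<rho>. Df n f Q P' \<le> Df n f Q P"
      by (rule Pn_rho_max[OF n1 rho1 cont_Df2[OF fconv n1 rho1 pos]])
  qed
  have mx1: "\<exists>P\<in>Pn_rho n \<rho>. \<forall>P'\<in>Pn_rho n \<rho>. Phi f n P' \<le> Phi f n P"
    using Pn_rho_max[OF n1 rho1 cont_Df1[OF fconv n1 rho1 Upos]] unfolding Df_Phi1[OF n1] .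
  have mx2: "\<exists>P\<in>Pn_rho n \<rho>. \<forall>P'\<in>Pn_rho n \<rho>. Phi (fstar f) n P' \<le> Phi (fstar f) n P"
    using Pn_rho_max[OF n1 rho1 cont_Df2[OF fconv n1 rho1 Upos]] unfolding Df_Phi2[OF n1] .
  have C: "\<rho> > 1 \<longrightarrow>
        (\<forall>\<beta>\<in>Gamma n \<rho>. Qbeta n \<rho> \<beta> \<in> Pn_rho n \<rho>)
      \<and> (\<exists>\<beta>\<in>Gamma n \<rho>. Df n f (Qbeta n \<rho> \<beta>) (Unif n) = uf f n \<rho>)
      \<and> (\<forall>\<beta>\<in>Gamma n \<rho>. Df n f (Qbeta n \<rho> \<beta>) (Unif n) \<le> uf f n \<rho>)
      \<and> (\<exists>\<beta>\<in>Gamma n \<rho>. Df n f (Unif n) (Qbeta n \<rho> \<beta>) = vf f n \<rho>)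
      \<and> (\<forall>\<beta>\<in>Gamma n \<rho>. Df n f (Unif n) (Qbeta n \<rho> \<beta>) \<le> vf f n \<rho>)"
  proof
    assume r: "\<rho> > 1"
    have inP: "\<forall>\<beta>\<in>Gamma n \<rho>. Qbeta n \<rho> \<beta> \<in> Pn_rho n \<rho>" using Qbeta_facts(10)[OF n2 r] by blast
    show "(\<forall>\<beta>\<in>Gamma n \<rho>. Qbeta n \<rho> \<beta> \<in> Pn_rho n \<rho>)
      \<and> (\<exists>\<beta>\<in>Gamma n \<rho>. Df n f (Qbeta n \<rho> \<beta>) (Unif n) = uf f n \<rho>)
      \<and> (\<forall>\<beta>\<in>Gamma n \<rho>. Df n f (Qbeta n \<rho> \<beta>) (Unif n) \<le> uf f n \<rho>)
      \<and> (\<exists>\<beta>\<in>Gamma n \<rho>. Df n f (Unif n) (Qbeta n \<rho> \<beta>) = vf f n \<rho>)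
      \<and> (\<forall>\<beta>\<in>Gamma n \<rho>. Df n f (Unif n) (Qbeta n \<rho> \<beta>) \<le> vf f n \<rho>)"
      unfolding Df_Phi1[OF n1] Df_Phi2[OF n1] uU vU
    proof (intro conjI)
      show "\<forall>\<beta>\<in>Gamma n \<rho>. Qbeta n \<rho> \<beta> \<in> Pn_rho n \<rho>" by (rule inP)
      show "\<exists>\<beta>\<in>Gamma n \<rho>. Phi f n (Qbeta n \<rho> \<beta>) = UU f n \<rho>" by (rule attained[OF fconv n2 r mx1])
      show "\<exists>\<beta>\<in>Gamma n \<rho>. Phi (fstar f) n (Qbeta n \<rho> \<beta>) = UU (fstar f) n \<rho>" by (rule attained[OF fs n2 r mx2])
      show "\<forall>\<beta>\<in>Gamma n \<rho>. Phi f n (Qbeta n \<rho> \<beta>) \<le> UU f n \<rho>"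
        using inP UU_props(2)[OF fconv n1 rho1] by blast
      show "\<forall>\<beta>\<in>Gamma n \<rho>. Phi (fstar f) n (Qbeta n \<rho> \<beta>) \<le> UU (fstar f) n \<rho>"
        using inP UU_props(2)[OF fs n1 rho1] by blast
    qed
  qed
  have D: "Max ((\<lambda>m. gf f \<rho> (real m / real n)) ` {0..n}) \<le> uf f n \<rho>
      \<and> uf f n \<rho> \<le> Sup (gf f \<rho> ` {0..1})
      \<and> Max ((\<lambda>m. gf (fstar f) \<rho> (real m / real n)) ` {0..n}) \<le> vf f n \<rho>
      \<and> vf f n \<rho> \<le> Sup (gf (fstar f) \<rho> ` {0..1})"
    unfolding uU vU
    using UU_props(3,4)[OF fconv n1 rho1] UU_props(3,4)[OF fs n1 rho1]
    by (auto intro!: Max.boundedI)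
  have E: "((\<lambda>k. uf f k \<rho>) \<longlonglongrightarrow> Sup (gf f \<rho> ` {0..1}))
   \<and> ((\<lambda>k. vf f k \<rho>) \<longlonglongrightarrow>
        Sup ((\<lambda>x. \<rho> * x / (1 + (\<rho> - 1) * x) * f ((1 + (\<rho> - 1) * x) / \<rho>)
                 + (1 - x) * f (1 + (\<rho> - 1) * x) / (1 + (\<rho> - 1) * x)) ` {0..1}))"
    using uf_limit[OF fconv rho1] vf_limit[OF fconv rho1] by (rule conjI)
  have Fp: "\<forall>K::real. (\<forall>x\<in>{0<..<1}. gf f \<rho> differentiable (at x))
         \<and> (\<forall>x\<in>{0<..<1}. deriv (gf f \<rho>) x \<le> K) \<and> 0 \<le> K \<longrightarrow>
        0 \<le> lim (\<lambda>k. uf f k \<rho>) - uf f n \<rho>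
      \<and> lim (\<lambda>k. uf f k \<rho>) - uf f n \<rho> \<le> K / real n"
    using part_f[OF fconv rho1 n1] by auto
  have G1: "((\<lambda>r. ereal (uf f n r)) \<longlongrightarrow>
         ereal (1 - 1 / real n) * f_at_0 f + ereal (f (real n) / real n)) at_top"
    by (rule part_g1[OF fconv n2])
  have G2: "f_at_0 f < \<infinity> \<and> (\<forall>t\<in>{0<..<real n}. f differentiable (at t))
        \<and> bdd_above ((\<lambda>t. \<bar>deriv f t\<bar>) ` {0<..<real n}) \<longrightarrow>
        0 \<le> Lim at_top (\<lambda>r. uf f n r) - uf f n \<rho>
      \<and> Lim at_top (\<lambda>r. uf f n r) - uf f n \<rho>
          \<le> 2 * Sup ((\<lambda>t. \<bar>deriv f t\<bar>) ` {0<..<real n}) * (real n - 1) / (real n + \<rho> - 1)"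
    using part_g2[OF fconv n2 rho1] by (rule impI)
  have Hh: "\<forall>m M :: real. twice_diff_pos f \<and> 0 \<le> m
         \<and> (\<forall>t\<in>{1/\<rho>..\<rho>}. m \<le> deriv (deriv f) t \<and> deriv (deriv f) t \<le> M) \<longrightarrow>
        (\<forall>Q\<in>Pn_rho n \<rho>.
           0 \<le> m / 2 * (real n * sqnorm2 n Q - 1)
         \<and> m / 2 * (real n * sqnorm2 n Q - 1) \<le> Df n f Q (Unif n)
         \<and> Df n f Q (Unif n) \<le> M / 2 * (real n * sqnorm2 n Q - 1)
         \<and> M / 2 * (real n * sqnorm2 n Q - 1) \<le> M * (\<rho> - 1)\<^sup>2 / (8 * \<rho>))"
  proof (intro allI impI ballI)
    fix m M :: real and Q
    assume hm: "twice_diff_pos f \<and> 0 \<le> m \<and> (\<forall>t\<in>{1/\<rho>..\<rho>}. m \<le> deriv (deriv f) t \<and> deriv (deriv f) t \<le> M)"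
      and Q: "Q \<in> Pn_rho n \<rho>"
    note vb = var_bound[OF n1 rho1 Q]
    have "1 \<in> {1/\<rho>..\<rho>}" using rho1 by auto
    hence "m \<le> deriv (deriv f) 1 \<and> deriv (deriv f) 1 \<le> M" using hm by blast
    hence M0: "0 \<le> M" using hm by linarith
    have T: "m / 2 * (real n * sqnorm2 n Q - 1) \<le> Df n f Q (Unif n)"
       "Df n f Q (Unif n) \<le> M / 2 * (real n * sqnorm2 n Q - 1)"
      using Df_taylor[where f=f and lo=m and hi=M, OF n1 rho1 Q f1] hm by auto
    have "M / 2 * (real n * sqnorm2 n Q - 1) \<le> M / 2 * ((\<rho> - 1)\<^sup>2 / (4 * \<rho>))"
      using vb(2) M0 by (intro mult_left_mono) auto
    also have "\<dots> = M * (\<rho> - 1)\<^sup>2 / (8 * \<rho>)" by simp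
    finally show "0 \<le> m / 2 * (real n * sqnorm2 n Q - 1)
         \<and> m / 2 * (real n * sqnorm2 n Q - 1) \<le> Df n f Q (Unif n)
         \<and> Df n f Q (Unif n) \<le> M / 2 * (real n * sqnorm2 n Q - 1)
         \<and> M / 2 * (real n * sqnorm2 n Q - 1) \<le> M * (\<rho> - 1)\<^sup>2 / (8 * \<rho>)"
      using T vb(1) hm by auto
  qed
  have Hc: "\<forall>Q\<in>Pn_rho n \<rho>. Df n (\<lambda>t. (t - 1)\<^sup>2) Q (Unif n) = 2 / 2 * (real n * sqnorm2 n Q - 1)"
    using chi2_exact[OF n1 rho1] by blast
  have Ii: "\<forall>d Mf :: real. 0 < d \<and> 0 < Mf \<and> twice_diff_pos f \<and> (\<forall>t>0. deriv (deriv f) t \<le> Mf)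
        \<and> \<rho> \<le> 1 + 4 * d / Mf + sqrt (8 * d / Mf + 16 * d\<^sup>2 / Mf\<^sup>2) \<longrightarrow>
        (\<forall>Q\<in>Pn_rho n \<rho>. Df n f Q (Unif n) \<le> d)"
  proof (intro allI impI ballI)
    fix d Mf :: real and Q
    assume hd: "0 < d \<and> 0 < Mf \<and> twice_diff_pos f \<and> (\<forall>t>0. deriv (deriv f) t \<le> Mf)
        \<and> \<rho> \<le> 1 + 4 * d / Mf + sqrt (8 * d / Mf + 16 * d\<^sup>2 / Mf\<^sup>2)"
      and Q: "Q \<in> Pn_rho n \<rho>"
    note vb = var_bound[OF n1 rho1 Q]
    have hi: "\<forall>t\<in>{1/\<rho>..\<rho>}. deriv (deriv f) t \<le> Mf"
    proof
      fix t assume "t \<in> {1/\<rho>..\<rho>}"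
      hence "t > 0" using rho1 by (smt (verit) atLeastAtMost_iff divide_pos_pos)
      thus "deriv (deriv f) t \<le> Mf" using hd by blast
    qed
    have "Df n f Q (Unif n) \<le> Mf / 2 * (real n * sqnorm2 n Q - 1)"
      using Df_taylor_hi[where f=f, OF n1 rho1 Q f1 _ hi] hd by blast
    also have "\<dots> \<le> Mf / 2 * ((\<rho> - 1)\<^sup>2 / (4 * \<rho>))"
      using vb(2) hd by (intro mult_left_mono) auto
    also have "\<dots> = Mf * (\<rho> - 1)\<^sup>2 / (8 * \<rho>)" by simp
    also have "\<dots> \<le> d" using rho_cond[of d Mf \<rho>] hd rho1 by blast
    finally show "Df n f Q (Unif n) \<le> d" .
  qed
  show ?thesis
    by (rule conjI[OF A conjI[OF B conjI[OF C conjI[OF D conjI[OF conjunct1[OF E] conjI[OF conjunct2[OF E]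
        conjI[OF Fp conjI[OF G1 conjI[OF G2 conjI[OF Hh conjI[OF Hc Ii]]]]]]]]]]])
qed

end
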